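(* For every $t>0$ there is a constant $C(t)<\infty$, independent of $N$, such that $$\mathbb E\big(d(\eta^{\text{aux}}_{\kappa(t)},\rho_t)\big)\le C(t)\,N^{-1/4},$$ where the expectation is over the random update times.
   Context: Parameters: $b,c\ge0$, $0<s<1/c$, $\lambda\in[0,1/2]$, and a Lipschitz function $R:[0,1]\to[0,1]$. Write $\langle p\rangle_\nu=\int p\,d\nu$. Bounded Lipschitz distance: $d(\mu,\nu)=\sup\{|\int f\,d\mu-\int f\,d\nu|:\|f\|_L=1,f(0)=0\}$. Reproduction density: $$\Phi(\nu)=2\lambda\delta_{R(\langle p\rangle_\nu)}+(1-2\lambda)\frac{1+s(b\langle p\rangle_\nu-cp)}{1+s(b-c)\langle p\rangle_\nu}\nu(dp).$$ Average auxiliary density: $\eta^{\text{aux}}_0=\rho_0$ and $\eta^{\text{aux}}_{k+1}=\eta^{\text{aux}}_k-\frac1N\eta^{\text{aux}}_k+\frac1N\Phi(\eta^{\text{aux}}_k)$. Mean-field solution: $(\rho_t)_{t\ge0}$ solves the mean-field equation with initial datum $\rho_0$. Weakly, for every Lipschitz $g$, $$\frac{d}{dt}\int g\,d\rho_t=2\lambda\langle\phi\rangle_{\rho_t}\Big(g(R(\langle p\rangle_{\rho_t}))-\int g\,d\rho_t\Big)+(1-2\lambda)\int g(p)\,sc\big(\langle p\rangle_{\rho_t}-p\big)\,\rho_t(dp),$$ with $\langle\phi\rangle_{\rho_t}=1+s(b-c)\langle p\rangle_{\rho_t}$. Update times: $\Delta\tau_k$ are independent exponential random variables with means $\langle\Delta\tau_k\rangle=N^{-1}(1+s(b-c)\langle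 p\rangle_{\eta^{\text{aux}}_k})^{-1}$. Set $\tau_k=\sum_{l=1}^{k-1}\Delta\tau_l$ and $\langle\tau_k\rangle=\sum_{l=1}^{k-1}\langle\Delta\tau_l\rangle$. Let $M(t)$ be the largest natural number with $\langle\tau_{M(t)}\rangle\le t$, and $\kappa(t)$ the random largest number with $\tau_{\kappa(t)}\le t$. *)

theory Defs
  imports "HOL-Probability.Probability"
begin

definition S01 :: "real measure" where
  "S01 = restrict_space borel {0..1}"

definition is_density :: "real measure \<Rightarrow> bool" where
  "is_density \<nu> \<longleftrightarrow> prob_space \<nu> \<and> sets \<nu> = sets S01"

definition mean :: "real measure \<Rightarrow> real" where
  "mean \<nu> = (\<integral>p. p \<partial>\<nu>)"

definition lincomb :: "real \<Rightarrow> real measure \<Rightarrow> real \<Rightarrow> real measure \<Rightarrow> real measure" where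
  "lincomb a \<mu> b \<nu> = measure_of (space S01) (sets S01)
     (\<lambda>A. ennreal a * emeasure \<mu> A + ennreal b * emeasure \<nu> A)"

definition Phi :: "real \<Rightarrow> real \<Rightarrow> real \<Rightarrow> real \<Rightarrow> (real \<Rightarrow> real) \<Rightarrow> real measure \<Rightarrow> real measure" where
  "Phi b c s lam R \<nu> =
     lincomb (2 * lam) (return S01 (R (mean \<nu>)))
             (1 - 2 * lam)
             (density \<nu> (\<lambda>p. ennreal ((1 + s * (b * mean \<nu> - c * p)) / (1 + s * (b - c) * mean \<nu>))))"

fun eta_aux :: "real \<Rightarrow> real \<Rightarrow> real \<Rightarrow> real \<Rightarrow> (real \<Rightarrow> real) \<Rightarrow> nat \<Rightarrow> real measure \<Rightarrow> nat \<Rightarrow> real measure" where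
  "eta_aux b c s lam R N \<rho>0 0 = \<rho>0"
| "eta_aux b c s lam R N \<rho>0 (Suc k) =
     lincomb (1 - 1 / real N) (eta_aux b c s lam R N \<rho>0 k)
             (1 / real N) (Phi b c s lam R (eta_aux b c s lam R N \<rho>0 k))"

definition lip_norm :: "(real \<Rightarrow> real) \<Rightarrow> real" where
  "lip_norm f = (SUP xy \<in> {(x, y). x \<in> {0..1} \<and> y \<in> {0..1} \<and> x \<noteq> y}.
                   \<bar>f (fst xy) - f (snd xy)\<bar> / \<bar>fst xy - snd xy\<bar>)"

definition bl_dist :: "real measure \<Rightarrow> real measure \<Rightarrow> real" where
  "bl_dist \<mu> \<nu> = (SUP f \<in> {f. (\<exists>L. lipschitz_on L {0..1} f) \<and> lip_norm f = 1 \<and> f 0 = 0}.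
                     \<bar>(\<integral>p. f p \<partial>\<mu>) - (\<integral>p. f p \<partial>\<nu>)\<bar>)"

definition mean_field_solution ::
  "real \<Rightarrow> real \<Rightarrow> real \<Rightarrow> real \<Rightarrow> (real \<Rightarrow> real) \<Rightarrow> real measure \<Rightarrow> (real \<Rightarrow> real measure) \<Rightarrow> bool" where
  "mean_field_solution b c s lam R \<rho>0 \<rho> \<longleftrightarrow>
     \<rho> 0 = \<rho>0 \<and> (\<forall>t\<ge>0. is_density (\<rho> t)) \<and>
     (\<forall>g. (\<exists>L. lipschitz_on L {0..1} g) \<longrightarrow> (\<forall>t\<ge>0.
        ((\<lambda>u. \<integral>p. g p \<partial>\<rho> u) has_real_derivative
           (2 * lam * (1 + s * (b - c) * mean (\<rho> t)) * (g (R (mean (\<rho> t))) - (\<integral>p. g p \<partial>\<rho> t))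
            + (1 - 2 * lam) * (\<integral>p. g p * (s * c * (mean (\<rho> t) - p)) \<partial>\<rho> t)))
        (at t within {0..})))"

definition tau :: "(nat \<Rightarrow> 'a \<Rightarrow> real) \<Rightarrow> nat \<Rightarrow> 'a \<Rightarrow> real" where
  "tau dtau k \<omega> = (\<Sum>l\<in>{1..<k}. dtau l \<omega>)"

definition kappa :: "(nat \<Rightarrow> 'a \<Rightarrow> real) \<Rightarrow> real \<Rightarrow> 'a \<Rightarrow> nat" where
  "kappa dtau t \<omega> = (GREATEST k. tau dtau k \<omega> \<le> t)"

end

theory Submission
  imports Defs
begin

lemma space_S01[simp]: "space S01 = {0..1}"
  by (simp add: S01_def space_restrict_space)

lemma sets_lincomb[simp]: "sets (lincomb a \<mu> b \<nu>) = sets S01"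
  unfolding lincomb_def by (rule sets.sets_measure_of_eq)

lemma space_lincomb[simp]: "space (lincomb a \<mu> b \<nu>) = {0..1}"
  unfolding lincomb_def by (metis sets.space_measure_of_eq space_S01)

lemma emeasure_lincomb:
  assumes "sets \<mu> = sets S01" "sets \<nu> = sets S01" "A \<in> sets S01"
  shows "emeasure (lincomb a \<mu> b \<nu>) A = ennreal a * emeasure \<mu> A + ennreal b * emeasure \<nu> A"
  unfolding lincomb_def
proof (rule emeasure_measure_of_sigma)
  show "sigma_algebra (space S01) (sets S01)" by (rule sets.sigma_algebra_axioms)
  show "positive (sets S01) (\<lambda>A. ennreal a * emeasure \<mu> A + ennreal b * emeasure \<nu> A)"
    by (simp add: positive_def)
  show "countably_additive (sets S01) (\<lambda>A. ennreal a * emeasure \<mu> A + ennreal b * emeasure \<nu> A)"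
  proof (rule countably_additiveI)
    fix F :: "nat \<Rightarrow> _" assume *: "range F \<subseteq> sets S01" "disjoint_family F"
    have "(\<Sum>i. ennreal a * emeasure \<mu> (F i) + ennreal b * emeasure \<nu> (F i))
        = ennreal a * (\<Sum>i. emeasure \<mu> (F i)) + ennreal b * (\<Sum>i. emeasure \<nu> (F i))"
      by (simp add: suminf_add[symmetric])
    also have "\<dots> = ennreal a * emeasure \<mu> (\<Union>i. F i) + ennreal b * emeasure \<nu> (\<Union>i. F i)"
      using * assms by (simp add: suminf_emeasure)
    finally show "(\<Sum>i. ennreal a * emeasure \<mu> (F i) + ennreal b * emeasure \<nu> (F i))
        = ennreal a * emeasure \<mu> (\<Union>i. F i) + ennreal b * emeasure \<nu> (\<Union>i. F i)" .
  qed
qed (fact assms)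

lemma meas_S01: "sets M = sets S01 \<Longrightarrow> f \<in> measurable S01 N \<Longrightarrow> f \<in> measurable M N"
  using measurable_cong_sets[of M S01 N N] by simp

lemma nn_integral_lincomb:
  assumes "sets \<mu> = sets S01" "sets \<nu> = sets S01" "f \<in> borel_measurable S01"
  shows "nn_integral (lincomb a \<mu> b \<nu>) f = ennreal a * nn_integral \<mu> f + ennreal b * nn_integral \<nu> f"
  using assms(3)
proof induction
  case (cong f g)
  have sp: "space \<mu> = {0..1}" "space \<nu> = {0..1}"
    using sets_eq_imp_space_eq[OF assms(1)] sets_eq_imp_space_eq[OF assms(2)] by auto
  have "nn_integral (lincomb a \<mu> b \<nu>) f = nn_integral (lincomb a \<mu> b \<nu>) g"
    by (rule nn_integral_cong) (use cong in simp)
  moreover have "nn_integral \<mu> f = nn_integral \<mu> g"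
    by (rule nn_integral_cong) (use cong sp in simp)
  moreover have "nn_integral \<nu> f = nn_integral \<nu> g"
    by (rule nn_integral_cong) (use cong sp in simp)
  ultimately show ?case using cong(4) by simp
next
  case (set A)
  have "A \<in> sets \<mu>" "A \<in> sets \<nu>" "A \<in> sets (lincomb a \<mu> b \<nu>)" using set assms by auto
  then show ?case using assms set by (simp add: emeasure_lincomb)
next
  case (mult f c)
  have m: "f \<in> borel_measurable \<mu>" "f \<in> borel_measurable \<nu>" "f \<in> borel_measurable (lincomb a \<mu> b \<nu>)"
    using mult(2) assms by (auto intro: meas_S01)
  have "nn_integral (lincomb a \<mu> b \<nu>) (\<lambda>x. c * f x) = c * (ennreal a * nn_integral \<mu> f + ennreal b * nn_integral \<nu> f)"
    using mult(4) nn_integral_cmult[OF m(3)] by simp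
  also have "\<dots> = ennreal a * (c * nn_integral \<mu> f) + ennreal b * (c * nn_integral \<nu> f)"
    by (metis distrib_left mult.left_commute)
  finally show ?case using nn_integral_cmult[OF m(1)] nn_integral_cmult[OF m(2)] by simp
next
  case (add f g)
  have m: "f \<in> borel_measurable \<mu>" "f \<in> borel_measurable \<nu>" "f \<in> borel_measurable (lincomb a \<mu> b \<nu>)"
       "g \<in> borel_measurable \<mu>" "g \<in> borel_measurable \<nu>" "g \<in> borel_measurable (lincomb a \<mu> b \<nu>)"
    using add assms by (auto intro: meas_S01)
  show ?case
    using add by (simp add: nn_integral_add m distrib_left algebra_simps)
next
  case (seq U)
  have m: "\<And>i. U i \<in> borel_measurable \<mu>" "\<And>i. U i \<in> borel_measurable \<nu>" "\<And>i. U i \<in> borel_measurable (lincomb a \<mu> b \<nu>)"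
    using seq(1) assms by (auto intro: meas_S01)
  have inc: "incseq U" using seq by simp
  have mono: "incseq (\<lambda>i. c * nn_integral M (U i))" if "\<And>i. U i \<in> borel_measurable M" for c M
  proof (rule incseq_SucI)
    fix i show "c * nn_integral M (U i) \<le> c * nn_integral M (U (Suc i))"
      using inc by (intro mult_left_mono nn_integral_mono) (auto simp: incseq_Suc_iff le_fun_def)
  qed
  have sup: "Sup (range U) = (\<lambda>x. SUP i. U i x)"
    by (rule ext) (simp add: SUP_apply[symmetric])
  have "nn_integral (lincomb a \<mu> b \<nu>) (Sup (range U)) = (SUP i. nn_integral (lincomb a \<mu> b \<nu>) (U i))"
    unfolding sup by (rule nn_integral_monotone_convergence_SUP[OF inc m(3)])
  also have "\<dots> = (SUP i. ennreal a * nn_integral \<mu> (U i) + ennreal b * nn_integral \<nu> (U i))"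
    using seq by simp
  also have "\<dots> = (SUP i. ennreal a * nn_integral \<mu> (U i)) + (SUP i. ennreal b * nn_integral \<nu> (U i))"
    by (rule ennreal_SUP_add) (use mono m in auto)
  also have "\<dots> = ennreal a * nn_integral \<mu> (Sup (range U)) + ennreal b * nn_integral \<nu> (Sup (range U))"
    unfolding sup nn_integral_monotone_convergence_SUP[OF inc m(1)] nn_integral_monotone_convergence_SUP[OF inc m(2)]
    by (simp add: SUP_mult_left_ennreal)
  finally show ?case .
qed

lemma density_space: "is_density \<nu> \<Longrightarrow> space \<nu> = {0..1}"
  unfolding is_density_def by (metis space_S01 sets_eq_imp_space_eq)

lemma integral_nonneg_lincomb:
  assumes "sets \<mu> = sets S01" "sets \<nu> = sets S01" "finite_measure \<mu>" "finite_measure \<nu>"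
    "0 \<le> a" "0 \<le> b" "h \<in> borel_measurable S01" "\<And>x. x \<in> {0..1} \<Longrightarrow> 0 \<le> h x \<and> h x \<le> B"
  shows "(\<integral>x. h x \<partial>lincomb a \<mu> b \<nu>) = a * (\<integral>x. h x \<partial>\<mu>) + b * (\<integral>x. h x \<partial>\<nu>)"
proof -
  have sp: "space \<mu> = {0..1}" "space \<nu> = {0..1}"
    using sets_eq_imp_space_eq[OF assms(1)] sets_eq_imp_space_eq[OF assms(2)] by auto
  have hm: "h \<in> borel_measurable \<mu>" "h \<in> borel_measurable \<nu>" "h \<in> borel_measurable (lincomb a \<mu> b \<nu>)"
    using assms by (auto intro: meas_S01)
  have int: "integrable \<mu> h" "integrable \<nu> h"
    using assms(3,4) hm assms(8) sp
    by (auto intro!: finite_measure.integrable_const_bound[where B=B] AE_I2)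
  have nn1: "nn_integral \<mu> h = ennreal (\<integral>x. h x \<partial>\<mu>)"
    using int(1) assms(8) sp by (intro nn_integral_eq_integral) auto
  have nn2: "nn_integral \<nu> h = ennreal (\<integral>x. h x \<partial>\<nu>)"
    using int(2) assms(8) sp by (intro nn_integral_eq_integral) auto
  have i1: "0 \<le> (\<integral>x. h x \<partial>\<mu>)" "0 \<le> (\<integral>x. h x \<partial>\<nu>)"
    using assms(8) sp by (auto intro!: integral_nonneg_AE AE_I2)
  have "(\<integral>x. h x \<partial>lincomb a \<mu> b \<nu>) = enn2real (\<integral>\<^sup>+x. ennreal (h x) \<partial>lincomb a \<mu> b \<nu>)"
    using hm assms(8) by (intro integral_eq_nn_integral) auto
  also have "(\<integral>\<^sup>+x. ennreal (h x) \<partial>lincomb a \<mu> b \<nu>) = ennreal a * nn_integral \<mu> h + ennreal b * nn_integral \<nu> h"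
  proof -
    have "(\<lambda>x. ennreal (h x)) \<in> borel_measurable S01" using assms(7) by measurable
    from nn_integral_lincomb[OF assms(1,2) this] show ?thesis by simp
  qed
  also have "\<dots> = ennreal (a * (\<integral>x. h x \<partial>\<mu>) + b * (\<integral>x. h x \<partial>\<nu>))"
    using i1 assms(5,6) by (simp add: nn1 nn2 ennreal_mult ennreal_plus)
  finally show ?thesis using i1 assms(5,6) by (simp add: ennreal_plus[symmetric] del: ennreal_plus)
qed

lemma integral_lincomb:
  assumes "sets \<mu> = sets S01" "sets \<nu> = sets S01" "finite_measure \<mu>" "finite_measure \<nu>"
    "0 \<le> a" "0 \<le> b" "f \<in> borel_measurable S01" "\<And>x. x \<in> {0..1} \<Longrightarrow> \<bar>f x\<bar> \<le> B"
  shows "(\<integral>x. f x \<partial>lincomb a \<mu> b \<nu>) = a * (\<integral>x. f x \<partial>\<mu>) + b * (\<integral>x. f x \<partial>\<nu>)"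
proof -
  have sp: "space \<mu> = {0..1}" "space \<nu> = {0..1}"
    using sets_eq_imp_space_eq[OF assms(1)] sets_eq_imp_space_eq[OF assms(2)] by auto
  define fp where "fp x = max (f x) 0" for x
  define fn where "fn x = max (- f x) 0" for x
  have f_eq: "f x = fp x - fn x" for x unfolding fp_def fn_def by auto
  have mp: "fp \<in> borel_measurable S01" "fn \<in> borel_measurable S01"
    unfolding fp_def fn_def using assms(7) by measurable
  have B0: "0 \<le> B" using assms(8)[of 0] by simp
  have bp: "\<And>x. x \<in> {0..1} \<Longrightarrow> 0 \<le> fp x \<and> fp x \<le> B" "\<And>x. x \<in> {0..1} \<Longrightarrow> 0 \<le> fn x \<and> fn x \<le> B"
    using assms(8) B0 unfolding fp_def fn_def by (auto simp: abs_le_iff)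
  have intg: "integrable M fp" "integrable M fn" if "sets M = sets S01" "finite_measure M" for M
  proof -
    have sM: "space M = {0..1}" using sets_eq_imp_space_eq[OF that(1)] by simp
    show "integrable M fp" "integrable M fn"
      using that mp bp sM by (auto intro!: finite_measure.integrable_const_bound[where B=B] AE_I2 intro: meas_S01)
  qed
  have fL: "finite_measure (lincomb a \<mu> b \<nu>)"
  proof (rule finite_measureI)
    have "emeasure (lincomb a \<mu> b \<nu>) (space (lincomb a \<mu> b \<nu>)) = ennreal a * emeasure \<mu> {0..1} + ennreal b * emeasure \<nu> {0..1}"
      using emeasure_lincomb[OF assms(1,2)] by (simp add: S01_def sets_restrict_space_iff)
    also have "\<dots> \<noteq> \<infinity>" using assms(3,4) sp
      by (simp add: ennreal_mult_eq_top_iff finite_measure.emeasure_finite)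
    finally show "emeasure (lincomb a \<mu> b \<nu>) (space (lincomb a \<mu> b \<nu>)) \<noteq> \<infinity>" .
  qed
  have "(\<integral>x. f x \<partial>lincomb a \<mu> b \<nu>) = (\<integral>x. fp x - fn x \<partial>lincomb a \<mu> b \<nu>)" by (simp add: f_eq[symmetric])
  also have "\<dots> = (\<integral>x. fp x \<partial>lincomb a \<mu> b \<nu>) - (\<integral>x. fn x \<partial>lincomb a \<mu> b \<nu>)"
    using intg[OF sets_lincomb fL] by (rule Bochner_Integration.integral_diff)
  also have "\<dots> = (a * (\<integral>x. fp x \<partial>\<mu>) + b * (\<integral>x. fp x \<partial>\<nu>)) - (a * (\<integral>x. fn x \<partial>\<mu>) + b * (\<integral>x. fn x \<partial>\<nu>))"
    using integral_nonneg_lincomb[OF assms(1-6) mp(1) bp(1)] integral_nonneg_lincomb[OF assms(1-6) mp(2) bp(2)] by simp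
  also have "\<dots> = a * (\<integral>x. fp x - fn x \<partial>\<mu>) + b * (\<integral>x. fp x - fn x \<partial>\<nu>)"
    using intg[OF assms(1,3)] intg[OF assms(2,4)] by (simp add: integral_diff algebra_simps)
  finally show ?thesis by (simp add: f_eq[symmetric])
qed

lemma mean_01:
  assumes "is_density \<nu>" shows "0 \<le> mean \<nu>" "mean \<nu> \<le> 1"
proof -
  interpret prob_space \<nu> using assms by (simp add: is_density_def)
  have sp: "space \<nu> = {0..1}" using density_space[OF assms] .
  show "0 \<le> mean \<nu>" unfolding mean_def using sp by (intro integral_nonneg_AE AE_I2) auto
  have "mean \<nu> \<le> (\<integral>p. 1 \<partial>\<nu>)" unfolding mean_def
    using sp assms by (intro integral_mono_AE' AE_I2) auto
  then show "mean \<nu> \<le> 1" by (simp add: prob_space)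
qed

lemma integrable_S01:
  assumes "is_density \<nu>" "g \<in> borel_measurable S01" "\<And>x. x \<in> {0..1} \<Longrightarrow> \<bar>g x\<bar> \<le> (B::real)"
  shows "integrable \<nu> g"
proof -
  interpret prob_space \<nu> using assms by (simp add: is_density_def)
  show ?thesis using assms density_space[OF assms(1)]
    by (intro integrable_const_bound[where B=B] AE_I2) (auto intro: meas_S01 simp: is_density_def)
qed

lemma is_density_lincomb:
  assumes "is_density \<mu>" "is_density \<nu>" "0 \<le> a" "0 \<le> b" "a + b = 1"
  shows "is_density (lincomb a \<mu> b \<nu>)"
proof -
  have "{0..1} \<in> sets S01" by (metis sets.top space_S01)
  then have "emeasure (lincomb a \<mu> b \<nu>) {0..1} = ennreal a * emeasure \<mu> {0..1} + ennreal b * emeasure \<nu> {0..1}"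
    using assms by (intro emeasure_lincomb) (auto simp: is_density_def)
  also have "\<dots> = ennreal a + ennreal b"
  proof -
    have "emeasure \<mu> {0..1} = 1" "emeasure \<nu> {0..1} = 1"
      using assms(1,2) by (metis density_space prob_space.emeasure_space_1 is_density_def)+
    then show ?thesis by simp
  qed
  also have "\<dots> = 1" using assms by (simp add: ennreal_plus[symmetric] del: ennreal_plus)
  finally show ?thesis unfolding is_density_def
    by (intro conjI prob_spaceI) auto
qed

lemma cont_meas: "continuous_on {0..1} f \<Longrightarrow> f \<in> borel_measurable S01"
  by (simp add: S01_def borel_measurable_continuous_on_restrict)

lemma id_meas: "(\<lambda>x::real. x) \<in> borel_measurable S01"
  by (rule cont_meas) (intro continuous_intros)

lemma step_arith:
  fixes N I J G m b c s lam :: real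
  assumes "N \<noteq> 0" "1 + s * (b - c) * m \<noteq> 0"
  shows "(1 - 1 / N) * I + (1 / N) * (2 * lam * G + (1 - 2 * lam) * (((1 + s * b * m) * I - s * c * J) / (1 + s * (b - c) * m)))
   = I + (1 / (N * (1 + s * (b - c) * m))) * (2 * lam * (1 + s * (b - c) * m) * (G - I) + (1 - 2 * lam) * (s * c * m * I - s * c * J))"
proof -
  define D where "D = 1 + s * (b - c) * m"
  have D: "D \<noteq> 0" using assms D_def by simp
  have e: "1 + s * b * m = D + s * c * m" unfolding D_def by (simp add: algebra_simps)
  show ?thesis unfolding D_def[symmetric] e using D assms(1)
    by (simp add: field_simps)
qed

definition phib :: "real \<Rightarrow> real \<Rightarrow> real \<Rightarrow> real measure \<Rightarrow> real" where
  "phib b c s \<nu> = 1 + s * (b - c) * mean \<nu>"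

definition qd :: "real \<Rightarrow> real \<Rightarrow> real \<Rightarrow> real measure \<Rightarrow> real \<Rightarrow> real" where
  "qd b c s \<nu> p = (1 + s * (b * mean \<nu> - c * p)) / (1 + s * (b - c) * mean \<nu>)"

lemma qd_meas: "qd b c s \<nu> \<in> borel_measurable S01"
  unfolding qd_def divide_inverse by (rule cont_meas) (intro continuous_intros)

locale params =
  fixes b c s lam :: real and R :: "real \<Rightarrow> real"
  assumes b0: "b \<ge> 0" and c0: "c \<ge> 0" and s0: "0 < s" and sc1: "s * c < 1"
    and lam0: "0 \<le> lam" and lam1: "lam \<le> 1/2"
    and R01: "\<forall>x\<in>{0..1}. R x \<in> {0..1}"
begin

lemma phib_ge: "0 \<le> m \<Longrightarrow> m \<le> 1 \<Longrightarrow> 1 - s * c \<le> 1 + s * (b - c) * m"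
proof -
  assume m: "0 \<le> m" "m \<le> 1"
  have "s * c * m \<le> s * c" using m s0 c0 by (simp add: mult_left_le)
  moreover have "0 \<le> s * b * m" using s0 b0 m by simp
  ultimately show ?thesis by (simp add: algebra_simps)
qed

lemma phib_le: "0 \<le> m \<Longrightarrow> m \<le> 1 \<Longrightarrow> 1 + s * (b - c) * m \<le> 1 + s * b"
proof -
  assume m: "0 \<le> m" "m \<le> 1"
  have "s * b * m \<le> s * b" using m s0 b0 by (simp add: mult_left_le)
  moreover have "0 \<le> s * c * m" using s0 c0 m by simp
  ultimately show ?thesis by (simp add: algebra_simps)
qed

lemma phib_pos: "is_density \<nu> \<Longrightarrow> 0 < phib b c s \<nu>"
  using phib_ge[OF mean_01] sc1 unfolding phib_def by (smt (verit))

lemma num_ge: "0 \<le> m \<Longrightarrow> m \<le> 1 \<Longrightarrow> 0 \<le> p \<Longrightarrow> p \<le> 1 \<Longrightarrow> 1 - s * c \<le> 1 + s * (b * m - c * p)"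
proof -
  assume m: "0 \<le> m" "m \<le> 1" "0 \<le> p" "p \<le> 1"
  have "s * c * p \<le> s * c" using m s0 c0 by (simp add: mult_left_le)
  moreover have "0 \<le> s * b * m" using s0 b0 m by simp
  ultimately show ?thesis by (simp add: right_diff_distrib mult.assoc)
qed

lemma qd_nonneg: assumes "is_density \<nu>" "p \<in> {0..1}" shows "0 \<le> qd b c s \<nu> p"
proof -
  have "1 - s * c \<le> 1 + s * (b * mean \<nu> - c * p)" using num_ge[OF mean_01[OF assms(1)]] assms(2) by auto
  moreover have "1 - s * c \<le> 1 + s * (b - c) * mean \<nu>" using phib_ge[OF mean_01[OF assms(1)]] .
  ultimately show ?thesis unfolding qd_def using sc1 by (intro divide_nonneg_pos) auto
qed


lemma int_qd:
  assumes d: "is_density \<nu>" and g: "g \<in> borel_measurable S01" and gb: "\<And>x. x \<in> {0..1} \<Longrightarrow> \<bar>g x\<bar> \<le> (B::real)"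
  shows "(\<integral>p. qd b c s \<nu> p * g p \<partial>\<nu>)
      = ((1 + s * b * mean \<nu>) * (\<integral>p. g p \<partial>\<nu>) - s * c * (\<integral>p. p * g p \<partial>\<nu>)) / phib b c s \<nu>"
proof -
  have ig: "integrable \<nu> g" by (rule integrable_S01[OF d g gb])
  have pg: "(\<lambda>p. p * g p) \<in> borel_measurable S01" using g id_meas by measurable
  have ipg: "integrable \<nu> (\<lambda>p. p * g p)"
  proof (rule integrable_S01[OF d pg])
    fix x :: real assume x: "x \<in> {0..1}"
    have "\<bar>x\<bar> * \<bar>g x\<bar> \<le> \<bar>g x\<bar>" using x by (intro mult_left_le_one_le) auto
    then show "\<bar>x * g x\<bar> \<le> \<bar>B\<bar>" using gb[OF x] by (simp add: abs_mult)
  qed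
  have "(\<integral>p. qd b c s \<nu> p * g p \<partial>\<nu>) = (\<integral>p. ((1 + s * b * mean \<nu>) * g p - s * c * (p * g p)) / phib b c s \<nu> \<partial>\<nu>)"
    by (rule Bochner_Integration.integral_cong) (auto simp: qd_def phib_def field_simps)
  also have "\<dots> = (\<integral>p. ((1 + s * b * mean \<nu>) * g p - s * c * (p * g p)) \<partial>\<nu>) / phib b c s \<nu>"
    by simp
  also have "(\<integral>p. ((1 + s * b * mean \<nu>) * g p - s * c * (p * g p)) \<partial>\<nu>)
      = (1 + s * b * mean \<nu>) * (\<integral>p. g p \<partial>\<nu>) - s * c * (\<integral>p. p * g p \<partial>\<nu>)"
    using ig ipg by simp
  finally show ?thesis .
qed

lemma density_qd:
  assumes d: "is_density \<nu>"
  shows "is_density (density \<nu> (\<lambda>p. ennreal (qd b c s \<nu> p)))"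
proof -
  have sp: "space \<nu> = {0..1}" by (rule density_space[OF d])
  interpret prob_space \<nu> using d by (simp add: is_density_def)
  have qm: "qd b c s \<nu> \<in> borel_measurable \<nu>" using qd_meas d by (auto intro: meas_S01 simp: is_density_def)
  have "(\<integral>p. qd b c s \<nu> p * 1 \<partial>\<nu>) = ((1 + s * b * mean \<nu>) * 1 - s * c * mean \<nu>) / phib b c s \<nu>"
    using int_qd[OF d, of "\<lambda>_. 1" 1] by (simp add: mean_def prob_space)
  also have "\<dots> = 1" using phib_pos[OF d] by (simp add: phib_def field_simps)
  finally have i1: "(\<integral>p. qd b c s \<nu> p \<partial>\<nu>) = 1" by simp
  have "emeasure (density \<nu> (\<lambda>p. ennreal (qd b c s \<nu> p))) (space \<nu>) = (\<integral>\<^sup>+p. ennreal (qd b c s \<nu> p) * indicator (space \<nu>) p \<partial>\<nu>)"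
    by (rule emeasure_density) (use qm in auto)
  also have "\<dots> = (\<integral>\<^sup>+p. ennreal (qd b c s \<nu> p) \<partial>\<nu>)"
    by (rule nn_integral_cong) simp
  also have "\<dots> = ennreal (\<integral>p. qd b c s \<nu> p \<partial>\<nu>)"
  proof (rule nn_integral_eq_integral)
    show "integrable \<nu> (qd b c s \<nu>)"
    proof (rule integrable_S01[OF d qd_meas])
      fix x :: real assume x: "x \<in> {0..1}"
      have "\<bar>qd b c s \<nu> x\<bar> = qd b c s \<nu> x" using qd_nonneg[OF d x] by simp
      also have "\<dots> \<le> (1 + s * b) / (1 - s * c)"
      proof -
        have n0: "0 \<le> 1 + s * (b * mean \<nu> - c * x)" using num_ge[OF mean_01[OF d]] x sc1 by fastforce
        have "s * (b * mean \<nu>) \<le> s * b" using mean_01[OF d] s0 b0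
          by (intro mult_left_mono) (auto simp: mult_left_le)
        moreover have "0 \<le> s * (c * x)" using x s0 c0 by simp
        ultimately have "1 + s * (b * mean \<nu> - c * x) \<le> 1 + s * b"
          by (simp add: right_diff_distrib)
        then show ?thesis unfolding qd_def using phib_ge[OF mean_01[OF d]] sc1 n0
          by (intro frac_le) auto
      qed
      finally show "\<bar>qd b c s \<nu> x\<bar> \<le> (1 + s * b) / (1 - s * c)" .
    qed
  qed (use qd_nonneg[OF d] sp in auto)
  finally have "emeasure (density \<nu> (\<lambda>p. ennreal (qd b c s \<nu> p))) (space \<nu>) = 1" using i1 by simp
  then have "prob_space (density \<nu> (\<lambda>p. ennreal (qd b c s \<nu> p)))"
    by (intro prob_spaceI) (simp only: space_density)
  moreover have "sets (density \<nu> (\<lambda>p. ennreal (qd b c s \<nu> p))) = sets S01"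
    using d unfolding is_density_def by (simp only: sets_density)
  ultimately show ?thesis unfolding is_density_def by (rule conjI)
qed


lemma Phi_eq: "Phi b c s lam R \<nu> = lincomb (2*lam) (return S01 (R (mean \<nu>))) (1-2*lam) (density \<nu> (\<lambda>p. ennreal (qd b c s \<nu> p)))"
  unfolding Phi_def qd_def ..

lemma Phi_density: assumes d: "is_density \<nu>" shows "is_density (Phi b c s lam R \<nu>)"
proof -
  have "R (mean \<nu>) \<in> {0..1}" using R01 mean_01[OF d] by auto
  then have "is_density (return S01 (R (mean \<nu>)))"
    unfolding is_density_def by (auto intro!: prob_space_return)
  then show ?thesis unfolding Phi_eq
    using density_qd[OF d] lam0 lam1 by (intro is_density_lincomb) auto
qed

lemma eta_density: assumes "N \<ge> 1" "is_density \<rho>0" shows "is_density (eta_aux b c s lam R N \<rho>0 k)"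
proof (induction k)
  case 0 then show ?case using assms by simp
next
  case (Suc k)
  have "1 / real N \<le> 1" using assms by simp
  then show ?case using Suc Phi_density[OF Suc] by (simp add: is_density_lincomb)
qed

definition Gf :: "(real \<Rightarrow> real) \<Rightarrow> real measure \<Rightarrow> real" where
  "Gf g \<nu> = 2 * lam * (1 + s * (b - c) * mean \<nu>) * (g (R (mean \<nu>)) - (\<integral>p. g p \<partial>\<nu>))
            + (1 - 2 * lam) * (\<integral>p. g p * (s * c * (mean \<nu> - p)) \<partial>\<nu>)"

lemma int_Phi:
  assumes d: "is_density \<nu>" and g: "g \<in> borel_measurable S01" and gb: "\<And>x. x \<in> {0..1} \<Longrightarrow> \<bar>g x\<bar> \<le> (B::real)"
  shows "(\<integral>p. g p \<partial>Phi b c s lam R \<nu>) = 2 * lam * g (R (mean \<nu>)) + (1 - 2 * lam) * (\<integral>p. qd b c s \<nu> p * g p \<partial>\<nu>)"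
proof -
  have Rm: "R (mean \<nu>) \<in> {0..1}" using R01 mean_01[OF d] by auto
  have dq: "is_density (density \<nu> (\<lambda>p. ennreal (qd b c s \<nu> p)))" by (rule density_qd[OF d])
  have fin: "finite_measure (return S01 (R (mean \<nu>)))" "finite_measure (density \<nu> (\<lambda>p. ennreal (qd b c s \<nu> p)))"
    using Rm dq prob_space_return[of "R (mean \<nu>)" S01] by (auto simp: is_density_def prob_space_def)
  have "(\<integral>p. g p \<partial>Phi b c s lam R \<nu>) = 2 * lam * (\<integral>p. g p \<partial>return S01 (R (mean \<nu>))) + (1 - 2 * lam) * (\<integral>p. g p \<partial>density \<nu> (\<lambda>p. ennreal (qd b c s \<nu> p)))"
    unfolding Phi_eq using lam0 lam1 dq fin
    by (intro integral_lincomb[OF _ _ _ _ _ _ g gb]) (auto simp: is_density_def)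
  also have "(\<integral>p. g p \<partial>return S01 (R (mean \<nu>))) = g (R (mean \<nu>))"
    using Rm g by (intro integral_return) auto
  also have "(\<integral>p. g p \<partial>density \<nu> (\<lambda>p. ennreal (qd b c s \<nu> p))) = (\<integral>p. qd b c s \<nu> p * g p \<partial>\<nu>)"
  proof -
    have "g \<in> borel_measurable \<nu>" "qd b c s \<nu> \<in> borel_measurable \<nu>"
      using g qd_meas d by (auto intro: meas_S01 simp: is_density_def)
    moreover have "AE x in \<nu>. 0 \<le> qd b c s \<nu> x" using qd_nonneg[OF d] density_space[OF d] by (auto intro: AE_I2)
    ultimately show ?thesis by (simp add: integral_density)
  qed
  finally show ?thesis .
qed

lemma step_identity:
  assumes d: "is_density \<nu>" and N: "N \<ge> 1" and g: "g \<in> borel_measurable S01" and gb: "\<And>x. x \<in> {0..1} \<Longrightarrow> \<bar>g x\<bar> \<le> (B::real)"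
  shows "(\<integral>p. g p \<partial>lincomb (1 - 1 / real N) \<nu> (1 / real N) (Phi b c s lam R \<nu>))
     = (\<integral>p. g p \<partial>\<nu>) + (1 / (real N * phib b c s \<nu>)) * Gf g \<nu>"
proof -
  have pg: "(\<lambda>p. p * g p) \<in> borel_measurable S01" using g id_meas by measurable
  have ipg: "integrable \<nu> (\<lambda>p. p * g p)"
  proof (rule integrable_S01[OF d pg])
    fix x :: real assume x: "x \<in> {0..1}"
    have "\<bar>x\<bar> * \<bar>g x\<bar> \<le> \<bar>g x\<bar>" using x by (intro mult_left_le_one_le) auto
    then show "\<bar>x * g x\<bar> \<le> \<bar>B\<bar>" using gb[OF x] by (simp add: abs_mult)
  qed
  have ig: "integrable \<nu> g" by (rule integrable_S01[OF d g gb])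
  have PD: "is_density (Phi b c s lam R \<nu>)" by (rule Phi_density[OF d])
  have L1: "(\<integral>p. g p \<partial>lincomb (1 - 1 / real N) \<nu> (1 / real N) (Phi b c s lam R \<nu>))
      = (1 - 1 / real N) * (\<integral>p. g p \<partial>\<nu>) + (1 / real N) * (\<integral>p. g p \<partial>Phi b c s lam R \<nu>)"
    using d PD N by (intro integral_lincomb[OF _ _ _ _ _ _ g gb]) (auto simp: is_density_def prob_space_def)
  have L2: "(\<integral>p. g p \<partial>Phi b c s lam R \<nu>) = 2 * lam * g (R (mean \<nu>)) + (1 - 2 * lam) *
     (((1 + s * b * mean \<nu>) * (\<integral>p. g p \<partial>\<nu>) - s * c * (\<integral>p. p * g p \<partial>\<nu>)) / phib b c s \<nu>)"
    using int_Phi[OF d g gb] int_qd[OF d g gb] by simp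
  have "(\<integral>p. g p * (s * c * (mean \<nu> - p)) \<partial>\<nu>) = s * c * mean \<nu> * (\<integral>p. g p \<partial>\<nu>) - s * c * (\<integral>p. p * g p \<partial>\<nu>)"
  proof -
    have "(\<integral>p. g p * (s * c * (mean \<nu> - p)) \<partial>\<nu>) = (\<integral>p. s * c * mean \<nu> * g p - s * c * (p * g p) \<partial>\<nu>)"
      by (rule Bochner_Integration.integral_cong) (auto simp: algebra_simps)
    also have "\<dots> = s * c * mean \<nu> * (\<integral>p. g p \<partial>\<nu>) - s * c * (\<integral>p. p * g p \<partial>\<nu>)"
      using ig ipg by simp
    finally show ?thesis .
  qed
  then have G: "Gf g \<nu> = 2 * lam * phib b c s \<nu> * (g (R (mean \<nu>)) - (\<integral>p. g p \<partial>\<nu>))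
      + (1 - 2 * lam) * (s * c * mean \<nu> * (\<integral>p. g p \<partial>\<nu>) - s * c * (\<integral>p. p * g p \<partial>\<nu>))"
    unfolding Gf_def phib_def by simp
  have p0: "1 + s * (b - c) * mean \<nu> \<noteq> 0" using phib_pos[OF d] by (simp add: phib_def)
  have N0: "real N \<noteq> 0" using N by simp
  show ?thesis unfolding L1 L2 G phib_def
    using step_arith[OF N0 p0] by simp
qed

end

definition Fset :: "(real \<Rightarrow> real) set" where
  "Fset = {f. (\<exists>L. lipschitz_on L {0..1} f) \<and> lip_norm f = 1 \<and> f 0 = 0}"

definition bl_le :: "real measure \<Rightarrow> real measure \<Rightarrow> real \<Rightarrow> bool" where
  "bl_le \<mu> \<nu> E \<longleftrightarrow> (\<forall>f\<in>Fset. \<bar>(\<integral>p. f p \<partial>\<mu>) - (\<integral>p. f p \<partial>\<nu>)\<bar> \<le> E)"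

definition Pairs :: "(real \<times> real) set" where
  "Pairs = {(x, y). x \<in> {0..1} \<and> y \<in> {0..1} \<and> x \<noteq> y}"

lemma lip_norm_alt: "lip_norm f = (SUP xy \<in> Pairs. \<bar>f (fst xy) - f (snd xy)\<bar> / \<bar>fst xy - snd xy\<bar>)"
  unfolding lip_norm_def Pairs_def ..

lemma Pairs_ne: "Pairs \<noteq> {}"
proof -
  have "(0, 1) \<in> Pairs" unfolding Pairs_def by simp
  then show ?thesis by blast
qed

lemma ratio_le:
  assumes "\<And>x y. x \<in> {0..1} \<Longrightarrow> y \<in> {0..1} \<Longrightarrow> \<bar>f x - f y\<bar> \<le> K * \<bar>x - y\<bar>" "xy \<in> Pairs"
  shows "\<bar>f (fst xy) - f (snd xy)\<bar> / \<bar>fst xy - snd xy\<bar> \<le> K"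
  using assms unfolding Pairs_def by (auto simp: divide_le_eq)

lemma lip_norm_le:
  assumes "\<And>x y. x \<in> {0..1} \<Longrightarrow> y \<in> {0..1} \<Longrightarrow> \<bar>f x - f y\<bar> \<le> K * \<bar>x - y\<bar>"
  shows "lip_norm f \<le> K"
  unfolding lip_norm_alt by (rule cSUP_least[OF Pairs_ne ratio_le[OF assms]])

lemma lip_bdd:
  assumes "\<And>x y. x \<in> {0..1} \<Longrightarrow> y \<in> {0..1} \<Longrightarrow> \<bar>f x - f y\<bar> \<le> K * \<bar>x - y\<bar>"
  shows "bdd_above ((\<lambda>xy. \<bar>f (fst xy) - f (snd xy)\<bar> / \<bar>fst xy - snd xy\<bar>) ` Pairs)"
  by (rule bdd_aboveI2[where M=K]) (rule ratio_le[OF assms])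

lemma lipschitz_abs:
  assumes "lipschitz_on L {0..1} f" "x \<in> {0..1}" "y \<in> {0..1}"
  shows "\<bar>f x - f y\<bar> \<le> L * \<bar>x - y\<bar>"
  using lipschitz_onD[OF assms] by (simp add: dist_real_def)

lemma lip_norm_bound:
  assumes "\<And>x y. x \<in> {0..1} \<Longrightarrow> y \<in> {0..1} \<Longrightarrow> \<bar>f x - f y\<bar> \<le> K * \<bar>x - y\<bar>"
    "x \<in> {0..1}" "y \<in> {0..1}"
  shows "\<bar>f x - f y\<bar> \<le> lip_norm f * \<bar>x - y\<bar>"
proof (cases "x = y")
  case True then show ?thesis by simp
next
  case False
  then have "(x, y) \<in> Pairs" using assms(2,3) by (simp add: Pairs_def)
  then have "\<bar>f x - f y\<bar> / \<bar>x - y\<bar> \<le> lip_norm f"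
    unfolding lip_norm_alt using cSUP_upper[OF _ lip_bdd[OF assms(1)]] by fastforce
  then show ?thesis using False by (simp add: divide_le_eq)
qed

lemma Fset_lip:
  assumes "f \<in> Fset" "x \<in> {0..1}" "y \<in> {0..1}"
  shows "\<bar>f x - f y\<bar> \<le> \<bar>x - y\<bar>"
proof -
  obtain L where L: "lipschitz_on L {0..1} f" and n: "lip_norm f = 1" using assms(1) by (auto simp: Fset_def)
  show ?thesis using lip_norm_bound[OF lipschitz_abs[OF L], OF _ _ assms(2,3)] n by simp
qed

lemma Fset_bound: "f \<in> Fset \<Longrightarrow> x \<in> {0..1} \<Longrightarrow> \<bar>f x\<bar> \<le> 1"
  using Fset_lip[of f x 0] by (auto simp: Fset_def)

lemma Fset_meas: "f \<in> Fset \<Longrightarrow> f \<in> borel_measurable S01"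
  unfolding Fset_def by (auto intro!: cont_meas intro: lipschitz_on_continuous_on)

lemma id_Fset: "(\<lambda>x. x) \<in> Fset"
proof -
  have "lip_norm (\<lambda>x::real. x) = (SUP xy \<in> Pairs. 1)"
    unfolding lip_norm_alt by (rule SUP_cong) (auto simp: Pairs_def)
  also have "\<dots> = 1" using Pairs_ne by simp
  finally show ?thesis unfolding Fset_def
    by (auto intro!: exI[of _ 1] lipschitz_onI simp: dist_real_def)
qed

lemma Fset_ne: "Fset \<noteq> {}" using id_Fset by auto

lemma Fset_diff_le2:
  assumes "is_density \<mu>" "is_density \<nu>" "f \<in> Fset"
  shows "\<bar>(\<integral>p. f p \<partial>\<mu>) - (\<integral>p. f p \<partial>\<nu>)\<bar> \<le> 2"
proof -
  have "\<bar>\<integral>p. f p \<partial>M\<bar> \<le> 1" if M: "is_density M" for M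
  proof -
    interpret prob_space M using M by (simp add: is_density_def)
    have "\<bar>\<integral>p. f p \<partial>M\<bar> \<le> (\<integral>p. \<bar>f p\<bar> \<partial>M)" by (rule integral_abs_bound)
    also have "\<dots> \<le> (\<integral>p. 1 \<partial>M)"
      using Fset_bound[OF assms(3)] density_space[OF M]
      by (intro integral_mono_AE' AE_I2) auto
    finally show ?thesis by (simp add: prob_space)
  qed
  from this[OF assms(1)] this[OF assms(2)] show ?thesis by linarith
qed

lemma bl_bdd: "is_density \<mu> \<Longrightarrow> is_density \<nu> \<Longrightarrow>
   bdd_above ((\<lambda>f. \<bar>(\<integral>p. f p \<partial>\<mu>) - (\<integral>p. f p \<partial>\<nu>)\<bar>) ` Fset)"
  by (rule bdd_aboveI2[where M=2]) (rule Fset_diff_le2)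

lemma bl_dist_le: "bl_le \<mu> \<nu> E \<Longrightarrow> bl_dist \<mu> \<nu> \<le> E"
  unfolding bl_dist_def bl_le_def Fset_def[symmetric] by (rule cSUP_least[OF Fset_ne]) auto

lemma bl_le_dist: "is_density \<mu> \<Longrightarrow> is_density \<nu> \<Longrightarrow> bl_le \<mu> \<nu> (bl_dist \<mu> \<nu>)"
  unfolding bl_dist_def bl_le_def Fset_def[symmetric] using cSUP_upper[OF _ bl_bdd] by blast

lemma bl_dist_le2: "is_density \<mu> \<Longrightarrow> is_density \<nu> \<Longrightarrow> bl_dist \<mu> \<nu> \<le> 2"
  by (rule bl_dist_le) (auto simp: bl_le_def intro: Fset_diff_le2)

lemma bl_le_nonneg: "bl_le \<mu> \<nu> E \<Longrightarrow> 0 \<le> E"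
  using id_Fset unfolding bl_le_def by (meson abs_ge_zero order_trans)

lemma bl_le_trans: "bl_le \<mu> \<nu> E1 \<Longrightarrow> bl_le \<nu> \<rho> E2 \<Longrightarrow> bl_le \<mu> \<rho> (E1 + E2)"
  unfolding bl_le_def by (smt (verit, best))

lemma bl_le_mono: "bl_le \<mu> \<nu> E1 \<Longrightarrow> E1 \<le> E2 \<Longrightarrow> bl_le \<mu> \<nu> E2"
  unfolding bl_le_def by force

lemma bl_le_mean: "bl_le \<mu> \<nu> E \<Longrightarrow> \<bar>mean \<mu> - mean \<nu>\<bar> \<le> E"
  using id_Fset unfolding bl_le_def mean_def by blast

lemma int_const_density: "is_density \<mu> \<Longrightarrow> (\<integral>p. a \<partial>\<mu>) = (a::real)"
  by (simp add: is_density_def prob_space.prob_space)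

lemma lip_int_diff:
  assumes dm: "is_density \<mu>" and dn: "is_density \<nu>" and E: "bl_le \<mu> \<nu> E" and K: "0 \<le> K"
    and gl: "\<And>x y. x \<in> {0..1} \<Longrightarrow> y \<in> {0..1} \<Longrightarrow> \<bar>g x - g y\<bar> \<le> K * \<bar>x - y\<bar>"
  shows "\<bar>(\<integral>p. g p \<partial>\<mu>) - (\<integral>p. g p \<partial>\<nu>)\<bar> \<le> K * E"
proof -
  define r where "r xy = \<bar>g (fst xy) - g (snd xy)\<bar> / \<bar>fst xy - snd xy\<bar>" for xy
  define l where "l = lip_norm g"
  have l_eq: "l = (SUP xy \<in> Pairs. r xy)" unfolding l_def r_def lip_norm_alt ..
  have bdd: "bdd_above (r ` Pairs)" unfolding r_def by (rule lip_bdd[OF gl])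
  have "(0, 1) \<in> Pairs" by (simp add: Pairs_def)
  then have "r (0,1) \<le> l" unfolding l_eq by (rule cSUP_upper[OF _ bdd])
  moreover have "0 \<le> r (0,1)" unfolding r_def by simp
  ultimately have "0 \<le> l" by linarith
  have lK: "l \<le> K" unfolding l_def by (rule lip_norm_le[OF gl])
  have E0: "0 \<le> E" by (rule bl_le_nonneg[OF E])
  have lipg: "lipschitz_on K {0..1} g" using gl K by (intro lipschitz_onI) (auto simp: dist_real_def)
  have gm: "g \<in> borel_measurable S01" by (rule cont_meas[OF lipschitz_on_continuous_on[OF lipg]])
  show ?thesis
  proof (cases "l = 0")
    case True
    have gc: "g x = g 0" if "x \<in> {0..1}" for x
    proof -
      have "\<bar>g x - g 0\<bar> \<le> lip_norm g * \<bar>x - 0\<bar>"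
        by (rule lip_norm_bound[OF gl that]) auto
      then show ?thesis using True by (simp add: l_def)
    qed
    have ic: "(\<integral>p. g p \<partial>M) = g 0" if M: "is_density M" for M
    proof -
      have "(\<integral>p. g p \<partial>M) = (\<integral>p. g 0 \<partial>M)"
      proof (rule Bochner_Integration.integral_cong)
        fix x assume "x \<in> space M" then show "g x = g 0" using gc density_space[OF M] by blast
      qed simp
      also have "\<dots> = g 0" by (rule int_const_density[OF M])
      finally show ?thesis .
    qed
    have "\<bar>(\<integral>p. g p \<partial>\<mu>) - (\<integral>p. g p \<partial>\<nu>)\<bar> = 0" using ic[OF dm] ic[OF dn] by simp
    also have "\<dots> \<le> K * E" using K E0 by simp
    finally show ?thesis .
  next
    case False
    then have lpos: "0 < l" using \<open>0 \<le> l\<close> by simp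
    define f where "f x = (g x - g 0) / l" for x
    have fd: "f x - f y = (g x - g y) / l" for x y
      unfolding f_def using lpos by (simp add: field_simps)
    have rf: "\<bar>f (fst xy) - f (snd xy)\<bar> / \<bar>fst xy - snd xy\<bar> = r xy / l" for xy
      unfolding fd r_def using lpos by simp
    have bdd2: "bdd_above ((\<lambda>xy. r xy / l) ` Pairs)"
    proof -
      obtain M where "\<forall>x\<in>Pairs. r x \<le> M" using bdd by (auto simp: bdd_above_def)
      then have "\<forall>x\<in>Pairs. r x / l \<le> M / l" using lpos by (auto intro: divide_right_mono)
      then show ?thesis by (auto simp: bdd_above_def)
    qed
    have "lip_norm f = (SUP xy \<in> Pairs. r xy / l)" unfolding lip_norm_alt rf ..
    also have "\<dots> = 1"
    proof (rule antisym)
      show "(SUP xy \<in> Pairs. r xy / l) \<le> 1"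
      proof (rule cSUP_least[OF Pairs_ne])
        fix xy assume "xy \<in> Pairs"
        then have "r xy \<le> l" unfolding l_eq by (rule cSUP_upper[OF _ bdd])
        then show "r xy / l \<le> 1" using lpos by simp
      qed
      define S where "S = (SUP xy \<in> Pairs. r xy / l)"
      have "(SUP xy \<in> Pairs. r xy) \<le> l * S"
      proof (rule cSUP_least[OF Pairs_ne])
        fix xy assume xy: "xy \<in> Pairs"
        have "r xy / l \<le> S" unfolding S_def by (rule cSUP_upper[OF xy bdd2])
        then show "r xy \<le> l * S" using lpos by (simp add: divide_le_eq mult.commute)
      qed
      then have "l \<le> l * (SUP xy \<in> Pairs. r xy / l)" unfolding S_def l_eq[symmetric] .
      then show "1 \<le> (SUP xy \<in> Pairs. r xy / l)" using lpos by simp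
    qed
    finally have fn: "lip_norm f = 1" .
    have fl: "lipschitz_on (K / l) {0..1} f"
    proof (rule lipschitz_onI)
      fix x y :: real assume "x \<in> {0..1}" "y \<in> {0..1}"
      then have "\<bar>g x - g y\<bar> / l \<le> K * \<bar>x - y\<bar> / l" using gl lpos by (simp add: divide_right_mono)
      then show "dist (f x) (f y) \<le> K / l * dist x y"
        unfolding fd dist_real_def using lpos by simp
    qed (use K lpos in simp)
    have fF: "f \<in> Fset" unfolding Fset_def using fl fn by (auto simp: f_def)
    have ge: "g x = l * f x + g 0" for x unfolding f_def using lpos by simp
    have fm: "f \<in> borel_measurable S01" by (rule Fset_meas[OF fF])
    have intg: "(\<integral>p. g p \<partial>M) = l * (\<integral>p. f p \<partial>M) + g 0" if M: "is_density M" for M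
    proof -
      have fi: "integrable M f" by (rule integrable_S01[OF M fm Fset_bound[OF fF]])
      have "(\<integral>p. g p \<partial>M) = (\<integral>p. l * f p + g 0 \<partial>M)" by (simp add: ge[symmetric])
      also have "\<dots> = l * (\<integral>p. f p \<partial>M) + g 0"
        using fi int_const_density[OF M] M by (simp add: is_density_def prob_space_def finite_measure.integrable_const)
      finally show ?thesis .
    qed
    have "\<bar>(\<integral>p. g p \<partial>\<mu>) - (\<integral>p. g p \<partial>\<nu>)\<bar> = l * \<bar>(\<integral>p. f p \<partial>\<mu>) - (\<integral>p. f p \<partial>\<nu>)\<bar>"
      using intg[OF dm] intg[OF dn] lpos by (simp add: right_diff_distrib[symmetric] abs_mult)
    also have "\<dots> \<le> l * E" using E fF lpos unfolding bl_le_def by (simp add: mult_left_mono)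
    also have "\<dots> \<le> K * E" using lK E0 by (simp add: mult_right_mono)
    finally show ?thesis .
  qed
qed

lemma abs_prod_le: "\<bar>x\<bar> \<le> a \<Longrightarrow> \<bar>y\<bar> \<le> b \<Longrightarrow> \<bar>(x::real) * y\<bar> \<le> a * b"
  by (simp add: abs_mult mult_mono')

lemma G_arith:
  fixes A s b c LR E m1 m2 I1 I2 J1 J2 F1 F2 :: real
  assumes A: "0 \<le> A" "A \<le> 1" and s: "0 \<le> s" and b: "0 \<le> b" and c: "0 \<le> c" and sc: "s * c \<le> 1"
    and m: "\<bar>m1 - m2\<bar> \<le> E" "0 \<le> m2" "m2 \<le> 1" "0 \<le> m1" "m1 \<le> 1"
    and I: "\<bar>I1 - I2\<bar> \<le> E" "\<bar>I1\<bar> \<le> 1" and J: "\<bar>J1 - J2\<bar> \<le> 2 * E"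
    and F: "\<bar>F1 - F2\<bar> \<le> LR * E" "\<bar>F1\<bar> \<le> 1"
  shows "\<bar>(A * (1 + s * (b - c) * m1) * (F1 - I1) + (1 - A) * (s * c * m1 * I1 - s * c * J1))
        - (A * (1 + s * (b - c) * m2) * (F2 - I2) + (1 - A) * (s * c * m2 * I2 - s * c * J2))\<bar>
       \<le> (2 * s * (b + c) + (1 + s * b) * (LR + 1) + 4 * s * c) * E"
proof -
  define p1 where "p1 = 1 + s * (b - c) * m1"
  define p2 where "p2 = 1 + s * (b - c) * m2"
  have E0: "0 \<le> E" using m(1) by linarith
  have dp: "\<bar>p1 - p2\<bar> \<le> s * (b + c) * E"
  proof -
    have "p1 - p2 = s * (b - c) * (m1 - m2)" unfolding p1_def p2_def by (simp add: algebra_simps)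
    moreover have "\<bar>s * (b - c)\<bar> \<le> s * (b + c)" using s b c by (simp add: abs_mult mult_left_mono)
    ultimately show ?thesis using abs_prod_le[OF _ m(1), of "s * (b - c)" "s * (b + c)"] by simp
  qed
  have p2b: "\<bar>p2\<bar> \<le> 1 + s * b"
  proof -
    have "s * c * m2 \<le> s * c" using m s c by (simp add: mult_left_le)
    moreover have "s * b * m2 \<le> s * b" using m s b by (simp add: mult_left_le)
    moreover have "0 \<le> s * c * m2" "0 \<le> s * b * m2" using m s b c by auto
    ultimately show ?thesis unfolding p2_def using sc by (simp add: algebra_simps abs_le_iff)
  qed
  have FI: "\<bar>F1 - I1\<bar> \<le> 2" using F(2) I(2) by linarith
  define T1 where "T1 = p1 * (F1 - I1) - p2 * (F2 - I2)"
  have T1e: "T1 = (p1 - p2) * (F1 - I1) + p2 * ((F1 - F2) - (I1 - I2))"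
    unfolding T1_def by (simp add: algebra_simps)
  have T1b: "\<bar>T1\<bar> \<le> 2 * s * (b + c) * E + (1 + s * b) * (LR + 1) * E"
  proof -
    have "\<bar>(F1 - F2) - (I1 - I2)\<bar> \<le> LR * E + E" using F(1) I(1) by linarith
    then have "\<bar>p2 * ((F1 - F2) - (I1 - I2))\<bar> \<le> (1 + s * b) * (LR * E + E)"
      by (rule abs_prod_le[OF p2b])
    moreover have "\<bar>(p1 - p2) * (F1 - I1)\<bar> \<le> s * (b + c) * E * 2" by (rule abs_prod_le[OF dp FI])
    ultimately show ?thesis unfolding T1e by (simp add: algebra_simps)
  qed
  define T2 where "T2 = (m1 * I1 - J1) - (m2 * I2 - J2)"
  have T2b: "\<bar>T2\<bar> \<le> 4 * E"
  proof -
    have "T2 = (m1 - m2) * I1 + m2 * (I1 - I2) - (J1 - J2)" unfolding T2_def by (simp add: algebra_simps)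
    moreover have "\<bar>(m1 - m2) * I1\<bar> \<le> E * 1" by (rule abs_prod_le[OF m(1) I(2)])
    moreover have "\<bar>m2 * (I1 - I2)\<bar> \<le> 1 * E" by (rule abs_prod_le) (use m I in auto)
    ultimately show ?thesis using J by linarith
  qed
  have eq: "(A * (1 + s * (b - c) * m1) * (F1 - I1) + (1 - A) * (s * c * m1 * I1 - s * c * J1))
        - (A * (1 + s * (b - c) * m2) * (F2 - I2) + (1 - A) * (s * c * m2 * I2 - s * c * J2))
       = A * T1 + (1 - A) * (s * c) * T2"
    unfolding T1_def T2_def p1_def p2_def by (simp add: algebra_simps)
  have "\<bar>A * T1\<bar> \<le> 1 * (2 * s * (b + c) * E + (1 + s * b) * (LR + 1) * E)"
    by (rule abs_prod_le[OF _ T1b]) (use A in auto)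
  moreover have "\<bar>(1 - A) * (s * c) * T2\<bar> \<le> (s * c) * (4 * E)"
    by (rule abs_prod_le[OF _ T2b]) (use A s c in \<open>auto simp: abs_mult intro: mult_left_le_one_le\<close>)
  ultimately show ?thesis unfolding eq by (simp add: algebra_simps)
qed


lemma pf_lip: assumes "f \<in> Fset" "x \<in> {0..1}" "y \<in> {0..1}"
  shows "\<bar>x * f x - y * f y\<bar> \<le> 2 * \<bar>x - y\<bar>"
proof -
  have "x * f x - y * f y = x * (f x - f y) + f y * (x - y)" by (simp add: algebra_simps)
  moreover have "\<bar>x * (f x - f y)\<bar> \<le> 1 * \<bar>x - y\<bar>"
    by (rule abs_prod_le) (use assms Fset_lip in auto)
  moreover have "\<bar>f y * (x - y)\<bar> \<le> 1 * \<bar>x - y\<bar>"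
    by (rule abs_prod_le) (use assms Fset_bound in auto)
  ultimately show ?thesis by linarith
qed

lemma Fset_pmeas: "f \<in> Fset \<Longrightarrow> (\<lambda>p. p * f p) \<in> borel_measurable S01"
  using Fset_meas id_meas by measurable

lemma Fset_pbound: "f \<in> Fset \<Longrightarrow> x \<in> {0..1} \<Longrightarrow> \<bar>x * f x\<bar> \<le> 1"
  using abs_prod_le[of x 1 "f x" 1] Fset_bound[of f x] by auto

lemma Fset_J: "is_density \<nu> \<Longrightarrow> f \<in> Fset \<Longrightarrow> \<bar>\<integral>p. p * f p \<partial>\<nu>\<bar> \<le> 1"
  and Fset_I: "is_density \<nu> \<Longrightarrow> f \<in> Fset \<Longrightarrow> \<bar>\<integral>p. f p \<partial>\<nu>\<bar> \<le> 1"
proof -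
  assume M: "is_density \<nu>" and f: "f \<in> Fset"
  interpret prob_space \<nu> using M by (simp add: is_density_def)
  have "\<bar>\<integral>p. p * f p \<partial>\<nu>\<bar> \<le> (\<integral>p. \<bar>p * f p\<bar> \<partial>\<nu>)" by (rule integral_abs_bound)
  also have "\<dots> \<le> (\<integral>p. 1 \<partial>\<nu>)"
    using Fset_pbound[OF f] density_space[OF M] by (intro integral_mono_AE' AE_I2) auto
  finally show "\<bar>\<integral>p. p * f p \<partial>\<nu>\<bar> \<le> 1" by (simp add: prob_space)
  have "\<bar>\<integral>p. f p \<partial>\<nu>\<bar> \<le> (\<integral>p. \<bar>f p\<bar> \<partial>\<nu>)" by (rule integral_abs_bound)
  also have "\<dots> \<le> (\<integral>p. 1 \<partial>\<nu>)"
    using Fset_bound[OF f] density_space[OF M] by (intro integral_mono_AE' AE_I2) auto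
  finally show "\<bar>\<integral>p. f p \<partial>\<nu>\<bar> \<le> 1" by (simp add: prob_space)
qed

context params
begin

lemma Gf_alt:
  assumes d: "is_density \<nu>" and f: "f \<in> Fset"
  shows "Gf f \<nu> = 2 * lam * (1 + s * (b - c) * mean \<nu>) * (f (R (mean \<nu>)) - (\<integral>p. f p \<partial>\<nu>))
     + (1 - 2 * lam) * (s * c * mean \<nu> * (\<integral>p. f p \<partial>\<nu>) - s * c * (\<integral>p. p * f p \<partial>\<nu>))"
proof -
  have ig: "integrable \<nu> f" by (rule integrable_S01[OF d Fset_meas[OF f] Fset_bound[OF f]])
  have ipg: "integrable \<nu> (\<lambda>p. p * f p)" by (rule integrable_S01[OF d Fset_pmeas[OF f] Fset_pbound[OF f]])
  have "(\<integral>p. f p * (s * c * (mean \<nu> - p)) \<partial>\<nu>) = (\<integral>p. s * c * mean \<nu> * f p - s * c * (p * f p) \<partial>\<nu>)"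
    by (rule Bochner_Integration.integral_cong) (auto simp: algebra_simps)
  also have "\<dots> = s * c * mean \<nu> * (\<integral>p. f p \<partial>\<nu>) - s * c * (\<integral>p. p * f p \<partial>\<nu>)"
    using ig ipg by simp
  finally show ?thesis unfolding Gf_def by simp
qed

definition KG :: real where "KG = 2 * (1 + s * b) + 2 * s * c"

lemma Gf_bound:
  assumes d: "is_density \<nu>" and f: "f \<in> Fset"
  shows "\<bar>Gf f \<nu>\<bar> \<le> KG"
proof -
  define m where "m = mean \<nu>"
  define I where "I = (\<integral>p. f p \<partial>\<nu>)"
  define J where "J = (\<integral>p. p * f p \<partial>\<nu>)"
  have m: "0 \<le> m" "m \<le> 1" using mean_01[OF d] by (auto simp: m_def)
  have I: "\<bar>I\<bar> \<le> 1" using Fset_I[OF d f] by (simp add: I_def)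
  have J: "\<bar>J\<bar> \<le> 1" using Fset_J[OF d f] by (simp add: J_def)
  have FR: "\<bar>f (R m)\<bar> \<le> 1" using Fset_bound[OF f] R01 m by auto
  have p: "\<bar>1 + s * (b - c) * m\<bar> \<le> 1 + s * b" using phib_ge[OF m] phib_le[OF m] sc1 by (simp add: abs_le_iff)
  have t1: "\<bar>2 * lam * (1 + s * (b - c) * m) * (f (R m) - I)\<bar> \<le> 1 * (1 + s * b) * 2"
    by (intro abs_prod_le p) (use lam0 lam1 FR I in auto)
  have "\<bar>m * I - J\<bar> \<le> 2"
  proof -
    have "\<bar>m * I\<bar> \<le> 1 * 1" by (rule abs_prod_le) (use m I in auto)
    then show ?thesis using J by linarith
  qed
  then have t2: "\<bar>(1 - 2 * lam) * (s * c) * (m * I - J)\<bar> \<le> 1 * (s * c) * 2"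
    by (intro abs_prod_le) (use lam0 lam1 s0 c0 in auto)
  have "Gf f \<nu> = 2 * lam * (1 + s * (b - c) * m) * (f (R m) - I) + (1 - 2 * lam) * (s * c) * (m * I - J)"
    unfolding Gf_alt[OF d f] m_def I_def J_def by (simp add: algebra_simps)
  then show ?thesis using t1 t2 unfolding KG_def by linarith
qed

end

locale params2 = params +
  fixes LR :: real
  assumes LR: "lipschitz_on LR {0..1} R"
begin

definition LG :: real where "LG = 2 * s * (b + c) + (1 + s * b) * (LR + 1) + 4 * s * c"

lemma Gf_lip:
  assumes dm: "is_density \<mu>" and dn: "is_density \<nu>" and E: "bl_le \<mu> \<nu> E" and f: "f \<in> Fset"
  shows "\<bar>Gf f \<mu> - Gf f \<nu>\<bar> \<le> LG * E"
proof -
  have LR0: "0 \<le> LR" using LR by (rule lipschitz_on_nonneg)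
  have E0: "0 \<le> E" by (rule bl_le_nonneg[OF E])
  have mm: "\<bar>mean \<mu> - mean \<nu>\<bar> \<le> E" by (rule bl_le_mean[OF E])
  have II: "\<bar>(\<integral>p. f p \<partial>\<mu>) - (\<integral>p. f p \<partial>\<nu>)\<bar> \<le> E" using E f unfolding bl_le_def by blast
  have JJ: "\<bar>(\<integral>p. p * f p \<partial>\<mu>) - (\<integral>p. p * f p \<partial>\<nu>)\<bar> \<le> 2 * E"
    by (rule lip_int_diff[OF dm dn E]) (use pf_lip[OF f] in auto)
  have FF: "\<bar>f (R (mean \<mu>)) - f (R (mean \<nu>))\<bar> \<le> LR * E"
  proof -
    have "\<bar>f (R (mean \<mu>)) - f (R (mean \<nu>))\<bar> \<le> \<bar>R (mean \<mu>) - R (mean \<nu>)\<bar>"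
      using Fset_lip[OF f] R01 mean_01[OF dm] mean_01[OF dn] by auto
    also have "\<dots> \<le> LR * \<bar>mean \<mu> - mean \<nu>\<bar>"
      using lipschitz_abs[OF LR] mean_01[OF dm] mean_01[OF dn] by auto
    also have "\<dots> \<le> LR * E" using mm LR0 by (simp add: mult_left_mono)
    finally show ?thesis .
  qed
  have F1: "\<bar>f (R (mean \<mu>))\<bar> \<le> 1" using Fset_bound[OF f] R01 mean_01[OF dm] by auto
  show ?thesis
    unfolding Gf_alt[OF dm f] Gf_alt[OF dn f] LG_def
    using G_arith[of "2 * lam" s b c "mean \<mu>" "mean \<nu>" E "\<integral>p. f p \<partial>\<mu>" "\<integral>p. f p \<partial>\<nu>"
        "\<integral>p. p * f p \<partial>\<mu>" "\<integral>p. p * f p \<partial>\<nu>" "f (R (mean \<mu>))" "f (R (mean \<nu>))" LR]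
      lam0 lam1 s0 b0 c0 sc1 mm mean_01[OF dm] mean_01[OF dn] II Fset_I[OF dm f] JJ FF F1
    by simp
qed

end

locale setting = params2 +
  fixes \<rho>0 :: "real measure" and \<rho> :: "real \<Rightarrow> real measure"
  assumes mfs: "mean_field_solution b c s lam R \<rho>0 \<rho>"
begin

lemma rho_density: "0 \<le> t \<Longrightarrow> is_density (\<rho> t)"
  using mfs unfolding mean_field_solution_def by blast

lemma rho_deriv:
  assumes f: "f \<in> Fset" and t: "0 \<le> t"
  shows "((\<lambda>u. \<integral>p. f p \<partial>\<rho> u) has_real_derivative Gf f (\<rho> t)) (at t within {0..})"
proof -
  obtain L where "lipschitz_on L {0..1} f" using f by (auto simp: Fset_def)
  then show ?thesis using mfs t unfolding mean_field_solution_def Gf_def by blast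
qed

lemma rho_lip:
  assumes f: "f \<in> Fset" and u: "0 \<le> u" and v: "0 \<le> v"
  shows "\<bar>(\<integral>p. f p \<partial>\<rho> v) - (\<integral>p. f p \<partial>\<rho> u)\<bar> \<le> KG * \<bar>v - u\<bar>"
proof -
  define S where "S = {min u v..max u v}"
  have "norm ((\<lambda>w. \<integral>p. f p \<partial>\<rho> w) v - (\<lambda>w. \<integral>p. f p \<partial>\<rho> w) u) \<le> KG * norm (v - u)"
  proof (rule field_differentiable_bound[where S=S])
    show "convex S" unfolding S_def by simp
    fix z assume z: "z \<in> S"
    then have z0: "0 \<le> z" using u v unfolding S_def by auto
    show "((\<lambda>w. \<integral>p. f p \<partial>\<rho> w) has_field_derivative Gf f (\<rho> z)) (at z within S)"
      by (rule DERIV_subset[OF rho_deriv[OF f z0]]) (use u v in \<open>auto simp: S_def\<close>)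
    show "norm (Gf f (\<rho> z)) \<le> KG" using Gf_bound[OF rho_density[OF z0] f] by simp
  qed (auto simp: S_def)
  then show ?thesis by simp
qed

lemma rho_bl: "0 \<le> u \<Longrightarrow> 0 \<le> v \<Longrightarrow> bl_le (\<rho> v) (\<rho> u) (KG * \<bar>v - u\<bar>)"
  unfolding bl_le_def using rho_lip by blast

lemma KG_nonneg: "0 \<le> KG"
  unfolding KG_def using s0 b0 c0 by simp

lemma LG_nonneg: "0 \<le> LG"
  unfolding LG_def using s0 b0 c0 lipschitz_on_nonneg[OF LR] by simp

lemma rho_second:
  assumes f: "f \<in> Fset" and u: "0 \<le> u" and uv: "u \<le> v"
  shows "\<bar>(\<integral>p. f p \<partial>\<rho> v) - (\<integral>p. f p \<partial>\<rho> u) - (v - u) * Gf f (\<rho> u)\<bar> \<le> LG * KG * (v - u)^2"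
proof -
  define S where "S = {u..v}"
  define \<phi> where "\<phi> w = (\<integral>p. f p \<partial>\<rho> w) - w * Gf f (\<rho> u)" for w
  have "norm (\<phi> v - \<phi> u) \<le> (LG * (KG * (v - u))) * norm (v - u)"
  proof (rule field_differentiable_bound[where S=S])
    show "convex S" unfolding S_def by simp
    fix z assume z: "z \<in> S"
    then have z0: "0 \<le> z" using u unfolding S_def by auto
    have "((\<lambda>w. \<integral>p. f p \<partial>\<rho> w) has_field_derivative Gf f (\<rho> z)) (at z within S)"
      by (rule DERIV_subset[OF rho_deriv[OF f z0]]) (use u in \<open>auto simp: S_def\<close>)
    then show "(\<phi> has_field_derivative (Gf f (\<rho> z) - Gf f (\<rho> u))) (at z within S)"
      unfolding \<phi>_def by (auto intro!: derivative_eq_intros)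
    have "\<bar>Gf f (\<rho> z) - Gf f (\<rho> u)\<bar> \<le> LG * (KG * \<bar>z - u\<bar>)"
      by (rule Gf_lip[OF rho_density[OF z0] rho_density[OF u] rho_bl[OF u z0] f])
    also have "\<dots> \<le> LG * (KG * (v - u))"
      using z KG_nonneg LG_nonneg unfolding S_def by (auto intro!: mult_left_mono)
    finally show "norm (Gf f (\<rho> z) - Gf f (\<rho> u)) \<le> LG * (KG * (v - u))" by simp
  qed (use uv in \<open>auto simp: S_def\<close>)
  then have "\<bar>\<phi> v - \<phi> u\<bar> \<le> LG * KG * (v - u)^2" using uv by (simp add: power2_eq_square mult.assoc)
  moreover have "\<phi> v - \<phi> u = (\<integral>p. f p \<partial>\<rho> v) - (\<integral>p. f p \<partial>\<rho> u) - (v - u) * Gf f (\<rho> u)"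
    unfolding \<phi>_def by (simp add: algebra_simps)
  ultimately show ?thesis by simp
qed

end

context setting
begin

definition eta :: "nat \<Rightarrow> nat \<Rightarrow> real measure" where
  "eta N k = eta_aux b c s lam R N \<rho>0 k"

definition hh :: "nat \<Rightarrow> nat \<Rightarrow> real" where
  "hh N k = 1 / (real N * phib b c s (eta N k))"

definition sig :: "nat \<Rightarrow> nat \<Rightarrow> real" where
  "sig N k = (\<Sum>l<k. hh N l)"

definition HH :: real where "HH = 1 / (1 - s * c)"

lemma HH_pos: "0 < HH" unfolding HH_def using sc1 by simp

lemma eta_dens: "N \<ge> 1 \<Longrightarrow> is_density \<rho>0 \<Longrightarrow> is_density (eta N k)"
  unfolding eta_def by (rule eta_density)

lemma hh_bounds:
  assumes N: "N \<ge> 1" and d0: "is_density \<rho>0"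
  shows "0 < hh N k" "hh N k \<le> HH / real N" "1 / (real N * (1 + s * b)) \<le> hh N k"
proof -
  have d: "is_density (eta N k)" by (rule eta_dens[OF N d0])
  have p1: "1 - s * c \<le> phib b c s (eta N k)" "phib b c s (eta N k) \<le> 1 + s * b"
    using phib_ge[OF mean_01[OF d]] phib_le[OF mean_01[OF d]] by (auto simp: phib_def)
  have pp: "0 < phib b c s (eta N k)" by (rule phib_pos[OF d])
  have Np: "0 < real N" using N by simp
  show "0 < hh N k" unfolding hh_def using pp Np by simp
  have "1 / (real N * phib b c s (eta N k)) \<le> 1 / (real N * (1 - s * c))"
    using p1 pp Np sc1 by (intro frac_le) (auto intro: mult_left_mono)
  then show "hh N k \<le> HH / real N" unfolding hh_def HH_def by (simp add: mult.commute)
  show "1 / (real N * (1 + s * b)) \<le> hh N k" unfolding hh_def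
    using p1 pp Np by (simp add: frac_le mult_left_mono)
qed

lemma sig_nonneg: "N \<ge> 1 \<Longrightarrow> is_density \<rho>0 \<Longrightarrow> 0 \<le> sig N k"
  unfolding sig_def using hh_bounds(1) by (simp add: sum_nonneg less_imp_le)

lemma sig_Suc: "sig N (Suc k) = sig N k + hh N k"
  unfolding sig_def by simp

lemma eta_Suc: "eta N (Suc k) = lincomb (1 - 1 / real N) (eta N k) (1 / real N) (Phi b c s lam R (eta N k))"
  unfolding eta_def by simp

lemma disc_bound:
  assumes N: "N \<ge> 1" and d0: "is_density \<rho>0"
  defines "a \<equiv> LG * HH / real N" and "c0 \<equiv> LG * KG * (HH / real N)^2"
  shows "bl_le (eta N k) (\<rho> (sig N k)) (real k * c0 * (1 + a)^k)"
proof (induction k)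
  case 0
  have "\<rho> 0 = \<rho>0" using mfs by (simp add: mean_field_solution_def)
  then show ?case by (simp add: eta_def sig_def bl_le_def)
next
  case (Suc k)
  define E where "E = real k * c0 * (1 + a)^k"
  define h where "h = hh N k"
  define \<sigma> where "\<sigma> = sig N k"
  have a0: "0 \<le> a" unfolding a_def using LG_nonneg HH_pos by simp
  have c00: "0 \<le> c0" unfolding c0_def using LG_nonneg KG_nonneg by simp
  have E0: "0 \<le> E" unfolding E_def using a0 c00 by simp
  have h0: "0 < h" and hH: "h \<le> HH / real N" using hh_bounds[OF N d0] by (auto simp: h_def)
  have s0': "0 \<le> \<sigma>" unfolding \<sigma>_def by (rule sig_nonneg[OF N d0])
  have dk: "is_density (eta N k)" by (rule eta_dens[OF N d0])
  have dr: "is_density (\<rho> \<sigma>)" by (rule rho_density[OF s0'])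
  have IH: "bl_le (eta N k) (\<rho> \<sigma>) E" using Suc.IH by (simp add: E_def \<sigma>_def)
  have "bl_le (eta N (Suc k)) (\<rho> (sig N (Suc k))) ((1 + a) * E + c0)"
    unfolding bl_le_def
  proof
    fix f assume f: "f \<in> Fset"
    have X: "(\<integral>p. f p \<partial>eta N (Suc k)) = (\<integral>p. f p \<partial>eta N k) + h * Gf f (eta N k)"
      unfolding eta_Suc h_def hh_def
      by (rule step_identity[OF dk N Fset_meas[OF f] Fset_bound[OF f]])
    have Y: "\<bar>(\<integral>p. f p \<partial>\<rho> (\<sigma> + h)) - (\<integral>p. f p \<partial>\<rho> \<sigma>) - h * Gf f (\<rho> \<sigma>)\<bar> \<le> LG * KG * h^2"
      using rho_second[OF f s0', of "\<sigma> + h"] h0 by simp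
    have Z: "\<bar>Gf f (eta N k) - Gf f (\<rho> \<sigma>)\<bar> \<le> LG * E" by (rule Gf_lip[OF dk dr IH f])
    have W: "\<bar>(\<integral>p. f p \<partial>eta N k) - (\<integral>p. f p \<partial>\<rho> \<sigma>)\<bar> \<le> E" using IH f unfolding bl_le_def by blast
    have "h * \<bar>Gf f (eta N k) - Gf f (\<rho> \<sigma>)\<bar> \<le> (HH / real N) * (LG * E)"
      using Z hH h0 by (intro mult_mono) auto
    also have "\<dots> = a * E" unfolding a_def by simp
    finally have Z': "\<bar>h * Gf f (eta N k) - h * Gf f (\<rho> \<sigma>)\<bar> \<le> a * E"
      using h0 by (simp add: right_diff_distrib[symmetric] abs_mult)
    have "LG * KG * h^2 \<le> LG * KG * (HH / real N)^2"
      using hH h0 LG_nonneg KG_nonneg by (intro mult_left_mono power_mono) auto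
    then have Y': "LG * KG * h^2 \<le> c0" unfolding c0_def .
    have "sig N (Suc k) = \<sigma> + h" by (simp add: sig_Suc \<sigma>_def h_def)
    then show "\<bar>(\<integral>p. f p \<partial>eta N (Suc k)) - (\<integral>p. f p \<partial>\<rho> (sig N (Suc k)))\<bar> \<le> (1 + a) * E + c0"
      using X Y Y' W Z' by (simp add: algebra_simps)
  qed
  moreover have "(1 + a) * E + c0 \<le> real (Suc k) * c0 * (1 + a)^(Suc k)"
  proof -
    have "1 \<le> (1 + a)^(Suc k)" using a0 by (intro one_le_power) simp
    then have "c0 * 1 \<le> c0 * (1 + a)^(Suc k)" using c00 by (intro mult_left_mono)
    then have "c0 \<le> c0 * (1 + a)^(Suc k)" by simp
    then show ?thesis unfolding E_def by (simp add: algebra_simps)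
  qed
  ultimately show ?case by (rule bl_le_mono)
qed

end

context prob_space
begin

lemma expo_facts:
  assumes r: "0 < r" and D: "distributed M lborel X (exponential_density r)"
  shows "X \<in> borel_measurable M" "integrable M X" "integrable M (\<lambda>x. (X x)^2)"
    "expectation X = 1 / r" "expectation (\<lambda>x. (X x - 1 / r)^2) = 1 / r^2"
    "AE x in M. 0 \<le> X x"
proof -
  show Xm: "X \<in> borel_measurable M" using distributed_measurable[OF D] by simp
  show i1: "integrable M X" using erlang_ith_moment_integrable[OF r D, of 1] by simp
  show i2: "integrable M (\<lambda>x. (X x)^2)" using erlang_ith_moment_integrable[OF r D, of 2] by simp
  show e: "expectation X = 1 / r" by (rule exponential_distributed_expectation[OF r D])
  show "expectation (\<lambda>x. (X x - 1 / r)^2) = 1 / r^2"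
    using exponential_distributed_variance[OF r D] e by simp
  have "emeasure M (X -` {..<0} \<inter> space M) = (\<integral>\<^sup>+x. ennreal (exponential_density r x) * indicator {..<0} x \<partial>lborel)"
    by (rule distributed_emeasure[OF D]) simp
  also have "\<dots> = 0"
    by (intro nn_integral_zero' AE_I2) (auto simp: exponential_density_def indicator_def)
  finally have "emeasure M (X -` {..<0} \<inter> space M) = 0" by simp
  then have "AE x in M. x \<notin> X -` {..<0} \<inter> space M"
    by (intro AE_I[where N="X -` {..<0} \<inter> space M"]) (use Xm in auto)
  then show "AE x in M. 0 \<le> X x" by (auto elim!: eventually_mono simp: not_less)
qed

lemma sum_var:
  fixes X :: "nat \<Rightarrow> 'a \<Rightarrow> real" and r :: "nat \<Rightarrow> real"
  assumes ind: "indep_vars (\<lambda>_. borel) X I" and L: "finite L" "L \<subseteq> I"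
    and D: "\<And>l. l \<in> L \<Longrightarrow> distributed M lborel (X l) (exponential_density (r l))"
    and r: "\<And>l. l \<in> L \<Longrightarrow> 0 < r l" and a: "0 < a"
  shows "prob {x \<in> space M. a \<le> \<bar>\<Sum>l\<in>L. X l x - 1 / r l\<bar>} \<le> (\<Sum>l\<in>L. 1 / (r l)^2) / a^2"
proof -
  define Y where "Y l x = X l x - 1 / r l" for l x
  note ef = expo_facts[OF r D]
  have Ym: "Y l \<in> borel_measurable M" if "l \<in> L" for l
    unfolding Y_def by (intro borel_measurable_diff ef(1)[OF that that] borel_measurable_const)
  have Yi: "integrable M (Y l)" if "l \<in> L" for l unfolding Y_def using ef(2)[OF that that] by simp
  have Ye: "expectation (Y l) = 0" if "l \<in> L" for l
    unfolding Y_def using ef(2,4)[OF that that] prob_space by simp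
  have Y2: "integrable M (\<lambda>x. (Y l x)^2)" if "l \<in> L" for l
  proof -
    have "(\<lambda>x. (Y l x)^2) = (\<lambda>x. (X l x)^2 - 2 / r l * X l x + 1 / (r l)^2)"
      unfolding Y_def using r[OF that] by (auto simp: fun_eq_iff power2_eq_square field_simps)
    then show ?thesis using ef(2,3)[OF that that] by simp
  qed
  have Yind: "indep_vars (\<lambda>_. borel) Y L"
  proof -
    have "indep_vars (\<lambda>_. borel) (\<lambda>l x. (\<lambda>y. y - 1 / r l) (X l x)) L"
      by (rule indep_vars_compose2[OF indep_vars_subset[OF ind L(2)]]) simp
    then show ?thesis unfolding Y_def by simp
  qed
  have cross: "integrable M (\<lambda>x. Y l x * Y l' x) \<and> expectation (\<lambda>x. Y l x * Y l' x) = (if l = l' then 1 / (r l)^2 else 0)"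
    if l: "l \<in> L" "l' \<in> L" for l l'
  proof (cases "l = l'")
    case True
    then show ?thesis using Y2[OF l(1)] ef(5)[OF l(1) l(1)] by (simp add: Y_def power2_eq_square)
  next
    case False
    have I2: "indep_vars (\<lambda>_. borel) Y {l, l'}" by (rule indep_vars_subset[OF Yind]) (use l in auto)
    have "integrable M (\<lambda>x. \<Prod>i\<in>{l,l'}. Y i x)" "expectation (\<lambda>x. \<Prod>i\<in>{l,l'}. Y i x) = (\<Prod>i\<in>{l,l'}. expectation (Y i))"
      using indep_vars_integrable[OF _ I2] indep_vars_lebesgue_integral[OF _ I2] Yi l by auto
    then show ?thesis using False Ye l by simp
  qed
  define S where "S x = (\<Sum>l\<in>L. Y l x)" for x
  have S2: "(\<lambda>x. (S x)^2) = (\<lambda>x. \<Sum>l\<in>L. \<Sum>l'\<in>L. Y l x * Y l' x)"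
    unfolding S_def by (auto simp: power2_eq_square sum_product)
  have iS2: "integrable M (\<lambda>x. (S x)^2)" unfolding S2 using cross L(1) by auto
  have eS2: "expectation (\<lambda>x. (S x)^2) = (\<Sum>l\<in>L. 1 / (r l)^2)"
  proof -
    have "expectation (\<lambda>x. (S x)^2) = (\<Sum>l\<in>L. \<Sum>l'\<in>L. expectation (\<lambda>x. Y l x * Y l' x))"
      unfolding S2 using cross L(1) by (simp add: Bochner_Integration.integral_sum)
    also have "\<dots> = (\<Sum>l\<in>L. \<Sum>l'\<in>L. if l = l' then 1 / (r l)^2 else 0)"
      using cross by (intro sum.cong refl) auto
    also have "\<dots> = (\<Sum>l\<in>L. 1 / (r l)^2)" using L(1) by simp
    finally show ?thesis .
  qed
  have eS: "expectation S = 0" unfolding S_def using Yi Ye L(1) by (simp add: Bochner_Integration.integral_sum)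
  have Sm: "random_variable borel S" unfolding S_def using Ym by measurable
  have "prob {x \<in> space M. a \<le> \<bar>S x - expectation S\<bar>} \<le> variance S / a^2"
    by (rule Chebyshev_inequality[OF Sm iS2 a])
  moreover have "variance S = (\<Sum>l\<in>L. 1 / (r l)^2)" using eS eS2 by simp
  ultimately show ?thesis using eS by (simp add: S_def Y_def)
qed

end

lemma tau_mono:
  assumes nn: "\<And>l. 1 \<le> l \<Longrightarrow> 0 \<le> dt l \<omega>" and kk: "k \<le> k'"
  shows "tau dt k \<omega> \<le> tau dt k' \<omega>"
  unfolding tau_def using kk nn by (intro sum_mono2) auto

lemma kappa_bounds:
  assumes nn: "\<And>l. 1 \<le> l \<Longrightarrow> 0 \<le> dt l \<omega>"
    and k1: "tau dt k1 \<omega> \<le> t" and k2: "t < tau dt k2 \<omega>"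
  shows "k1 \<le> kappa dt t \<omega>" "kappa dt t \<omega> < k2"
proof -
  have bnd: "y \<le> k2" if y: "tau dt y \<omega> \<le> t" for y
  proof -
    show "y \<le> k2"
    proof (rule ccontr)
      assume "\<not> y \<le> k2"
      then have "tau dt k2 \<omega> \<le> tau dt y \<omega>" by (intro tau_mono[of dt \<omega>, OF nn]) auto
      then show False using y k2 by simp
    qed
  qed
  show "k1 \<le> kappa dt t \<omega>" unfolding kappa_def by (rule Greatest_le_nat[where P="\<lambda>k. tau dt k \<omega> \<le> t", OF k1 bnd])
  have P: "tau dt (kappa dt t \<omega>) \<omega> \<le> t" unfolding kappa_def by (rule GreatestI_nat[where P="\<lambda>k. tau dt k \<omega> \<le> t", OF k1 bnd])
  then have "kappa dt t \<omega> \<noteq> k2" using k2 by auto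
  moreover have "kappa dt t \<omega> \<le> k2" using bnd[OF P] .
  ultimately show "kappa dt t \<omega> < k2" by simp
qed

context setting
begin

definition TT :: "nat \<Rightarrow> nat \<Rightarrow> real" where
  "TT N k = (\<Sum>l\<in>{1..<k}. hh N l)"

lemma TT_mono:
  assumes N: "N \<ge> 1" and d0: "is_density \<rho>0" and kk: "k \<le> k'"
  shows "TT N k \<le> TT N k'"
  unfolding TT_def using kk hh_bounds(1)[OF N d0] by (intro sum_mono2) (auto intro: less_imp_le)

lemma TT_Suc:
  assumes N: "N \<ge> 1" and d0: "is_density \<rho>0"
  shows "TT N (Suc k) \<le> TT N k + HH / real N"
proof (cases "k = 0")
  case True then show ?thesis using HH_pos N by (simp add: TT_def)
next
  case False
  then have "{1..<Suc k} = insert k {1..<k}" by auto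
  then have "TT N (Suc k) = hh N k + TT N k" unfolding TT_def by simp
  then show ?thesis using hh_bounds(2)[OF N d0, of k] by simp
qed

lemma TT_lower:
  assumes N: "N \<ge> 1" and d0: "is_density \<rho>0"
  shows "(real k - 1) / (real N * (1 + s * b)) \<le> TT N k"
proof -
  have "(\<Sum>l\<in>{1..<k}. 1 / (real N * (1 + s * b))) \<le> TT N k"
    unfolding TT_def using hh_bounds(3)[OF N d0] by (intro sum_mono) auto
  moreover have "(\<Sum>l\<in>{1..<k}. 1 / (real N * (1 + s * b))) = real (k - 1) / (real N * (1 + s * b))"
    by simp
  moreover have "(real k - 1) / (real N * (1 + s * b)) \<le> real (k - 1) / (real N * (1 + s * b))"
    using N s0 b0 by (intro divide_right_mono) (auto simp: of_nat_diff)
  ultimately show ?thesis by linarith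
qed

lemma sig_TT:
  assumes N: "N \<ge> 1" and d0: "is_density \<rho>0"
  shows "\<bar>sig N k - TT N k\<bar> \<le> HH / real N"
proof (cases k)
  case 0 then show ?thesis using HH_pos by (simp add: sig_def TT_def)
next
  case (Suc j)
  have "{..<Suc j} = insert 0 {1..<Suc j}" by auto
  then have "sig N k = hh N 0 + TT N k" unfolding sig_def TT_def Suc by simp
  then show ?thesis using hh_bounds[OF N d0, of 0] by simp
qed


lemma det_bound:
  assumes N: "N \<ge> 1" and d0: "is_density \<rho>0" and t: "0 \<le> t" and Q: "0 \<le> Q"
    and j: "real j \<le> real N * Q" and jt: "\<bar>TT N j - t\<bar> \<le> \<epsilon>"
  shows "bl_dist (eta N j) (\<rho> t) \<le> Q * LG * KG * HH^2 * exp (LG * HH * Q) / real N + KG * (\<epsilon> + HH / real N)"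
proof -
  define a where "a = LG * HH / real N"
  define c0 where "c0 = LG * KG * (HH / real N)^2"
  have Np: "0 < real N" using N by simp
  have a0: "0 \<le> a" unfolding a_def using LG_nonneg HH_pos by simp
  have c00: "0 \<le> c0" unfolding c0_def using LG_nonneg KG_nonneg by simp
  have B1: "bl_le (eta N j) (\<rho> (sig N j)) (real j * c0 * (1 + a)^j)"
    unfolding a_def c0_def by (rule disc_bound[OF N d0])
  have "(1 + a)^j \<le> (exp a)^j" using a0 by (intro power_mono) (auto simp: exp_ge_add_one_self add.commute)
  also have "\<dots> = exp (real j * a)" by (simp add: exp_of_nat_mult)
  also have "\<dots> \<le> exp (real N * Q * a)" using j a0 by (intro exp_le_cancel_iff[THEN iffD2] mult_right_mono) auto
  also have "real N * Q * a = LG * HH * Q" unfolding a_def using Np by simp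
  finally have pw: "(1 + a)^j \<le> exp (LG * HH * Q)" .
  have jc: "real j * c0 \<le> Q * LG * KG * HH^2 / real N"
  proof -
    have "real j * c0 \<le> real N * Q * c0" using j c00 by (intro mult_right_mono) auto
    also have "\<dots> = Q * LG * KG * HH^2 / real N" unfolding c0_def using Np by (simp add: power2_eq_square field_simps)
    finally show ?thesis .
  qed
  have e1: "real j * c0 * (1 + a)^j \<le> Q * LG * KG * HH^2 / real N * exp (LG * HH * Q)"
    by (rule mult_mono[OF jc pw]) (use c00 a0 Q LG_nonneg KG_nonneg in auto)
  have sj: "0 \<le> sig N j" by (rule sig_nonneg[OF N d0])
  have B2: "bl_le (\<rho> (sig N j)) (\<rho> t) (KG * \<bar>sig N j - t\<bar>)" by (rule rho_bl[OF t sj])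
  have "\<bar>sig N j - t\<bar> \<le> \<epsilon> + HH / real N" using sig_TT[OF N d0, of j] jt by linarith
  then have e2: "KG * \<bar>sig N j - t\<bar> \<le> KG * (\<epsilon> + HH / real N)" using KG_nonneg by (simp add: mult_left_mono)
  have "bl_le (eta N j) (\<rho> t) (real j * c0 * (1 + a)^j + KG * \<bar>sig N j - t\<bar>)"
    by (rule bl_le_trans[OF B1 B2])
  then have "bl_le (eta N j) (\<rho> t) (Q * LG * KG * HH^2 / real N * exp (LG * HH * Q) + KG * (\<epsilon> + HH / real N))"
    by (rule bl_le_mono) (use e1 e2 in linarith)
  from bl_dist_le[OF this] show ?thesis by simp
qed

end

lemma powr_facts:
  assumes N: "(N::nat) \<ge> 1"
  shows "0 < real N powr (-1/4)" "real N powr (-1/4) \<le> 1" "1 / real N \<le> real N powr (-1/4)"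
    "1 / (real N * (real N powr (-1/4))^2) \<le> real N powr (-1/4)"
proof -
  define v where "v = real N powr (1/4)"
  have Np: "0 < real N" using N by simp
  have v1: "1 \<le> v" unfolding v_def using N by (intro ge_one_powr_ge_zero) auto
  have v4: "v ^ 4 = real N" unfolding v_def using Np by (simp add: powr_power)
  have w: "real N powr (-1/4) = 1 / v" unfolding v_def using Np by (simp add: powr_minus_divide)
  show "0 < real N powr (-1/4)" using Np by simp
  show "real N powr (-1/4) \<le> 1" unfolding w using v1 by simp
  have "v \<le> v^4" using v1 by (metis power_increasing_iff one_le_numeral power_one_right  order_trans zero_less_numeral less_imp_le le_less power_increasing)
  then have "1 / v^4 \<le> 1 / v" using v1 by (intro frac_le) auto
  then show "1 / real N \<le> real N powr (-1/4)" unfolding w by (simp add: v4)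
  have "v \<le> v^2" using v1 by (simp add: power2_eq_square)
  moreover have "1 / (v^4 * (1/v)^2) = v^2 / v^4" using v1 by (simp add: field_simps)
  moreover have "v^2 / v^4 = 1 / v^2" using v1 by (simp add: field_simps power_add[symmetric] eval_nat_numeral)
  ultimately have "1 / (v^4 * (1/v)^2) \<le> 1 / v" using v1 by (simp add: frac_le)
  then show "1 / (real N * (real N powr (-1/4))^2) \<le> real N powr (-1/4)"
    unfolding w by (simp add: v4)
qed

context setting
begin

definition Qc :: "real \<Rightarrow> real" where "Qc t = (1 + s * b) * (t + 2 * HH) + 2"

definition Cf :: "real \<Rightarrow> real" where
  "Cf t = Qc t * LG * KG * HH^2 * exp (LG * HH * Qc t) + 3 * KG * HH + 2 * (Qc t + Qc t / 4)"

lemma sumsq_bound: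
  assumes N: "N \<ge> 1" and d0: "is_density \<rho>0"
  shows "(\<Sum>l\<in>{1..<k}. (hh N l)^2) \<le> real k * (HH / real N)^2"
proof -
  have "(\<Sum>l\<in>{1..<k}. (hh N l)^2) \<le> (\<Sum>l\<in>{1..<k}. (HH / real N)^2)"
    using hh_bounds[OF N d0] by (intro sum_mono power_mono) (auto intro: less_imp_le)
  also have "\<dots> = real (k - 1) * (HH / real N)^2" by simp
  also have "\<dots> \<le> real k * (HH / real N)^2" by (intro mult_right_mono) auto
  finally show ?thesis .
qed

lemma main_N:
  assumes d0: "is_density \<rho>0" and t: "0 < t" and N: "N \<ge> 1" and PM: "prob_space M"
    and ind: "prob_space.indep_vars M (\<lambda>_. borel) dtau {1..}"
    and D: "\<forall>k\<ge>1. distributed M lborel (dtau k)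
              (exponential_density (real N * (1 + s * (b - c) * mean (eta_aux b c s lam R N \<rho>0 k))))"
  shows "(\<integral>\<^sup>+\<omega>. ennreal (bl_dist (eta_aux b c s lam R N \<rho>0 (kappa dtau t \<omega>)) (\<rho> t)) \<partial>M)
           \<le> ennreal (Cf t) * ennreal (real N powr (-1/4))"
proof -
  interpret P: prob_space M by (rule PM)
  define w where "w = real N powr (-1/4)"
  have w0: "0 < w" and w1: "w \<le> 1" and wN: "1 / real N \<le> w" and wN2: "1 / (real N * w^2) \<le> w"
    using powr_facts[OF N] by (auto simp: w_def)
  have Np: "0 < real N" using N by simp
  define \<epsilon> where "\<epsilon> = 2 * HH * w"
  have \<epsilon>0: "0 < \<epsilon>" unfolding \<epsilon>_def using HH_pos w0 by simp
  have \<epsilon>2: "\<epsilon> \<le> 2 * HH" unfolding \<epsilon>_def using HH_pos w1 by simp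
  have HN: "HH / real N \<le> \<epsilon> / 2"
  proof -
    have "HH * (1 / real N) \<le> HH * w" using wN HH_pos by (intro mult_left_mono) auto
    then show ?thesis unfolding \<epsilon>_def by simp
  qed
  define Q where "Q = Qc t"
  have Q0: "0 \<le> Q" unfolding Q_def Qc_def using t HH_pos s0 b0 by simp
  define r where "r l = real N * (1 + s * (b - c) * mean (eta_aux b c s lam R N \<rho>0 l))" for l
  have rh: "1 / r l = hh N l" for l unfolding r_def hh_def phib_def eta_def ..
  have rpos: "0 < r l" for l using hh_bounds(1)[OF N d0, of l] rh[of l] by (metis zero_less_divide_1_iff)
  have Dl: "distributed M lborel (dtau l) (exponential_density (r l))" if "1 \<le> l" for l
    using D that unfolding r_def by blast
  have dtm: "dtau l \<in> borel_measurable M" if "1 \<le> l" for l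
    by (rule P.expo_facts(1)[OF rpos Dl[OF that]])
  have tauTT: "tau dtau k \<omega> - TT N k = (\<Sum>l\<in>{1..<k}. dtau l \<omega> - 1 / r l)" for k \<omega>
    unfolding tau_def TT_def rh by (simp add: sum_subtractf)
  define K0 where "K0 = nat \<lceil>real N * (1 + s * b) * (t + \<epsilon>)\<rceil> + 2"
  have exK: "t + \<epsilon> < TT N K0"
  proof -
    have pb: "0 < real N * (1 + s * b)" using Np s0 b0 by (simp add: add_pos_nonneg)
    have "real N * (1 + s * b) * (t + \<epsilon>) < real K0 - 1" unfolding K0_def by linarith
    then have "t + \<epsilon> < (real K0 - 1) / (real N * (1 + s * b))" using pb by (simp add: field_simps)
    then show ?thesis using TT_lower[OF N d0, of K0] by linarith
  qed
  define k2 where "k2 = (LEAST k. t + \<epsilon> < TT N k)"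
  have k2a: "t + \<epsilon> < TT N k2" unfolding k2_def by (rule LeastI[of _ K0]) (rule exK)
  have k2n0: "k2 \<noteq> 0"
  proof
    assume "k2 = 0" then have "TT N k2 = 0" by (simp add: TT_def)
    then show False using k2a t \<epsilon>0 by simp
  qed
  have k2b: "TT N (k2 - 1) \<le> t + \<epsilon>"
  proof -
    have "\<not> t + \<epsilon> < TT N (k2 - 1)" unfolding k2_def by (rule not_less_Least) (use k2n0 in \<open>simp add: k2_def[symmetric]\<close>)
    then show ?thesis by simp
  qed
  have k2Q: "real k2 \<le> real N * Q"
  proof -
    have pb: "0 < real N * (1 + s * b)" using Np s0 b0 by (simp add: add_pos_nonneg)
    have "(real (k2 - 1) - 1) / (real N * (1 + s * b)) \<le> t + \<epsilon>" using TT_lower[OF N d0, of "k2 - 1"] k2b by linarith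
    then have "real (k2 - 1) - 1 \<le> real N * (1 + s * b) * (t + \<epsilon>)" using pb by (simp add: field_simps)
    moreover have "real N * (1 + s * b) * (t + \<epsilon>) \<le> real N * (1 + s * b) * (t + 2 * HH)"
      using \<epsilon>2 pb by (intro mult_left_mono) auto
    moreover have "real N * 2 \<ge> 2" using N by simp
    ultimately show ?thesis unfolding Q_def Qc_def using k2n0 by (simp add: of_nat_diff algebra_simps)
  qed
  define k1 where "k1 = (LEAST k. t - \<epsilon> \<le> TT N k)"
  have k1a: "t - \<epsilon> \<le> TT N k1" unfolding k1_def by (rule LeastI[of _ k2]) (use k2a \<epsilon>0 in simp)
  have k1k2: "k1 \<le> k2" unfolding k1_def by (rule Least_le) (use k2a \<epsilon>0 in simp)
  have k1b: "TT N k1 \<le> t - \<epsilon> / 2" if "k1 \<noteq> 0"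
  proof -
    have "\<not> t - \<epsilon> \<le> TT N (k1 - 1)" unfolding k1_def by (rule not_less_Least) (use that in \<open>simp add: k1_def[symmetric]\<close>)
    moreover have "TT N k1 \<le> TT N (k1 - 1) + HH / real N" using TT_Suc[OF N d0, of "k1 - 1"] that by simp
    ultimately show ?thesis using HN by linarith
  qed
  define S where "S k \<omega> = (\<Sum>l\<in>{1..<k}. dtau l \<omega> - 1 / r l)" for k \<omega>
  have Sm: "S k \<in> borel_measurable M" for k
    unfolding S_def using dtm by (intro borel_measurable_sum borel_measurable_diff borel_measurable_const) auto
  define B1 where "B1 = {\<omega> \<in> space M. \<epsilon> / 2 \<le> \<bar>S k1 \<omega>\<bar>}"
  define B2 where "B2 = {\<omega> \<in> space M. \<epsilon> \<le> \<bar>S k2 \<omega>\<bar>}"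
  have B1m: "B1 \<in> sets M" unfolding B1_def using Sm[of k1] by measurable
  have B2m: "B2 \<in> sets M" unfolding B2_def using Sm[of k2] by measurable
  have PB: "P.prob {\<omega> \<in> space M. a \<le> \<bar>S k \<omega>\<bar>} \<le> real k * (HH / real N)^2 / a^2" if a: "0 < a" for a k
  proof -
    have "P.prob {\<omega> \<in> space M. a \<le> \<bar>S k \<omega>\<bar>} \<le> (\<Sum>l\<in>{1..<k}. 1 / (r l)^2) / a^2"
      unfolding S_def by (rule P.sum_var[OF ind]) (use Dl rpos a in auto)
    also have "(\<Sum>l\<in>{1..<k}. 1 / (r l)^2) = (\<Sum>l\<in>{1..<k}. (hh N l)^2)"
      by (intro sum.cong refl) (simp add: rh[symmetric] power_one_over)
    also have "\<dots> / a^2 \<le> real k * (HH / real N)^2 / a^2"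
      by (intro divide_right_mono sumsq_bound[OF N d0]) auto
    finally show ?thesis .
  qed
  have PB1: "P.prob B1 \<le> Q * w"
  proof -
    have "P.prob B1 \<le> real k1 * (HH / real N)^2 / (\<epsilon> / 2)^2" unfolding B1_def by (rule PB) (use \<epsilon>0 in simp)
    also have "\<dots> = real k1 / (real N * (real N * w^2))" unfolding \<epsilon>_def using HH_pos Np w0 by (simp add: field_simps power2_eq_square)
    also have "\<dots> \<le> (real N * Q) / (real N * (real N * w^2))"
      using k1k2 k2Q Np w0 by (intro divide_right_mono) auto
    also have "\<dots> = Q * (1 / (real N * w^2))" using Np by simp
    also have "\<dots> \<le> Q * w" using wN2 Q0 by (intro mult_left_mono) auto
    finally show ?thesis .
  qed
  have PB2: "P.prob B2 \<le> Q * w / 4"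
  proof -
    have "P.prob B2 \<le> real k2 * (HH / real N)^2 / \<epsilon>^2" unfolding B2_def by (rule PB) (use \<epsilon>0 in simp)
    also have "\<dots> = real k2 / (4 * (real N * (real N * w^2)))" unfolding \<epsilon>_def using HH_pos Np w0 by (simp add: field_simps power2_eq_square)
    also have "\<dots> \<le> (real N * Q) / (4 * (real N * (real N * w^2)))"
      using k2Q Np w0 by (intro divide_right_mono) auto
    also have "\<dots> = Q * (1 / (real N * w^2)) / 4" using Np by simp
    also have "\<dots> \<le> Q * w / 4" using wN2 Q0 by (intro divide_right_mono mult_left_mono) auto
    finally show ?thesis .
  qed
  define A1 where "A1 = Q * LG * KG * HH^2 * exp (LG * HH * Q) + 3 * KG * HH"
  have A10: "0 \<le> A1" unfolding A1_def using Q0 LG_nonneg KG_nonneg HH_pos by simp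
  have good: "bl_dist (eta_aux b c s lam R N \<rho>0 (kappa dtau t \<omega>)) (\<rho> t) \<le> A1 * w"
    if om: "\<omega> \<in> space M" and nn: "\<And>l. 1 \<le> l \<Longrightarrow> 0 \<le> dtau l \<omega>" and nb: "\<omega> \<notin> B1 \<union> B2" for \<omega>
  proof -
    have t1: "tau dtau k1 \<omega> \<le> t"
    proof (cases "k1 = 0")
      case True then show ?thesis using t by (simp add: tau_def)
    next
      case False
      have "\<bar>S k1 \<omega>\<bar> < \<epsilon> / 2" using nb om unfolding B1_def by auto
      then show ?thesis using k1b[OF False] tauTT[of k1 \<omega>] unfolding S_def by linarith
    qed
    have t2: "t < tau dtau k2 \<omega>"
    proof -
      have "\<bar>S k2 \<omega>\<bar> < \<epsilon>" using nb om unfolding B2_def by auto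
      then show ?thesis using k2a tauTT[of k2 \<omega>] unfolding S_def by linarith
    qed
    define j where "j = kappa dtau t \<omega>"
    have j1: "k1 \<le> j" and j2: "j < k2" using kappa_bounds[of dtau \<omega>, OF nn t1 t2] by (auto simp: j_def)
    have "TT N k1 \<le> TT N j" by (rule TT_mono[OF N d0 j1])
    moreover have "TT N j \<le> TT N (k2 - 1)" by (rule TT_mono[OF N d0]) (use j2 in simp)
    ultimately have jt: "\<bar>TT N j - t\<bar> \<le> \<epsilon>" using k1a k2b by linarith
    have jQ: "real j \<le> real N * Q" using j2 k2Q by linarith
    have "bl_dist (eta N j) (\<rho> t) \<le> Q * LG * KG * HH^2 * exp (LG * HH * Q) / real N + KG * (\<epsilon> + HH / real N)"
      by (rule det_bound[OF N d0 _ Q0 jQ jt]) (use t in simp)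
    also have "\<dots> \<le> Q * LG * KG * HH^2 * exp (LG * HH * Q) * w + KG * (2 * HH * w + HH * w)"
    proof -
      have c: "0 \<le> Q * LG * KG * HH^2 * exp (LG * HH * Q)" using Q0 LG_nonneg KG_nonneg by simp
      have "Q * LG * KG * HH^2 * exp (LG * HH * Q) * (1 / real N) \<le> Q * LG * KG * HH^2 * exp (LG * HH * Q) * w"
        by (rule mult_left_mono[OF wN c])
      moreover have "HH * (1 / real N) \<le> HH * w" using wN HH_pos by (intro mult_left_mono) auto
      moreover have "KG * (\<epsilon> + HH / real N) \<le> KG * (2 * HH * w + HH * w)"
        using \<open>HH * (1 / real N) \<le> HH * w\<close> KG_nonneg unfolding \<epsilon>_def by (intro mult_left_mono) (auto simp: mult.commute)
      ultimately show ?thesis by simp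
    qed
    also have "\<dots> = A1 * w" unfolding A1_def by (simp add: algebra_simps)
    finally show ?thesis by (simp add: eta_def j_def)
  qed
  have nnAE: "AE \<omega> in M. \<forall>l. 1 \<le> l \<longrightarrow> 0 \<le> dtau l \<omega>"
    unfolding AE_all_countable
  proof
    fix l :: nat
    show "AE \<omega> in M. 1 \<le> l \<longrightarrow> 0 \<le> dtau l \<omega>"
    proof (cases "1 \<le> l")
      case True then show ?thesis using P.expo_facts(6)[OF rpos Dl[OF True]] by simp
    next
      case False then show ?thesis by simp
    qed
  qed
  have ptw: "AE \<omega> in M. ennreal (bl_dist (eta_aux b c s lam R N \<rho>0 (kappa dtau t \<omega>)) (\<rho> t))
      \<le> ennreal (A1 * w) + ennreal 2 * indicator (B1 \<union> B2) \<omega>"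
    using nnAE
  proof (rule AE_mp[OF _ AE_I2])
    fix \<omega> assume om: "\<omega> \<in> space M"
    show "(\<forall>l. 1 \<le> l \<longrightarrow> 0 \<le> dtau l \<omega>) \<longrightarrow> ennreal (bl_dist (eta_aux b c s lam R N \<rho>0 (kappa dtau t \<omega>)) (\<rho> t))
      \<le> ennreal (A1 * w) + ennreal 2 * indicator (B1 \<union> B2) \<omega>"
    proof
      assume nn: "\<forall>l. 1 \<le> l \<longrightarrow> 0 \<le> dtau l \<omega>"
      show "ennreal (bl_dist (eta_aux b c s lam R N \<rho>0 (kappa dtau t \<omega>)) (\<rho> t))
        \<le> ennreal (A1 * w) + ennreal 2 * indicator (B1 \<union> B2) \<omega>"
      proof (cases "\<omega> \<in> B1 \<union> B2")
        case True
        have "bl_dist (eta_aux b c s lam R N \<rho>0 (kappa dtau t \<omega>)) (\<rho> t) \<le> 2"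
          by (rule bl_dist_le2[OF eta_density[OF N d0] rho_density]) (use t in simp)
        then have "bl_dist (eta_aux b c s lam R N \<rho>0 (kappa dtau t \<omega>)) (\<rho> t) \<le> A1 * w + 2"
          using A10 w0 by (smt (verit) mult_nonneg_nonneg)
        then have "ennreal (bl_dist (eta_aux b c s lam R N \<rho>0 (kappa dtau t \<omega>)) (\<rho> t)) \<le> ennreal (A1 * w + 2)"
          by (rule ennreal_leI)
        also have "\<dots> = ennreal (A1 * w) + ennreal 2 * indicator (B1 \<union> B2) \<omega>"
          using True A10 w0 by (simp add: ennreal_plus)
        finally show ?thesis .
      next
        case False
        have "bl_dist (eta_aux b c s lam R N \<rho>0 (kappa dtau t \<omega>)) (\<rho> t) \<le> A1 * w"
          by (rule good[OF om _ False]) (use nn in auto)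
        then show ?thesis using False by (simp add: ennreal_leI)
      qed
    qed
  qed
  have "(\<integral>\<^sup>+\<omega>. ennreal (bl_dist (eta_aux b c s lam R N \<rho>0 (kappa dtau t \<omega>)) (\<rho> t)) \<partial>M)
      \<le> (\<integral>\<^sup>+\<omega>. ennreal (A1 * w) + ennreal 2 * indicator (B1 \<union> B2) \<omega> \<partial>M)"
    by (rule nn_integral_mono_AE[OF ptw])
  also have "\<dots> = ennreal (A1 * w) + ennreal 2 * emeasure M (B1 \<union> B2)"
    using B1m B2m by (simp add: nn_integral_add nn_integral_cmult_indicator P.emeasure_space_1)
  also have "emeasure M (B1 \<union> B2) \<le> ennreal (Q * w + Q * w / 4)"
  proof -
    have "emeasure M (B1 \<union> B2) \<le> emeasure M B1 + emeasure M B2"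
      by (rule emeasure_subadditive[OF B1m B2m])
    also have "\<dots> = ennreal (P.prob B1) + ennreal (P.prob B2)"
      by (simp add: P.emeasure_eq_measure)
    also have "\<dots> \<le> ennreal (Q * w) + ennreal (Q * w / 4)"
      by (intro add_mono ennreal_leI PB1 PB2)
    also have "\<dots> = ennreal (Q * w + Q * w / 4)" using Q0 w0 by (subst ennreal_plus) auto
    finally show ?thesis .
  qed
  then have "ennreal (A1 * w) + ennreal 2 * emeasure M (B1 \<union> B2) \<le> ennreal (A1 * w) + ennreal 2 * ennreal (Q * w + Q * w / 4)"
    by (intro add_left_mono mult_left_mono) auto
  also have "\<dots> = ennreal (Cf t * w)"
  proof -
    define X where "X = Q * w + Q * w / 4"
    have X0: "0 \<le> X" unfolding X_def using Q0 w0 by simp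
    have e1: "ennreal 2 * ennreal X = ennreal (2 * X)" using X0 by (simp add: ennreal_mult)
    have e2: "ennreal (A1 * w) + ennreal (2 * X) = ennreal (A1 * w + 2 * X)"
      using X0 A10 w0 by (intro ennreal_plus[symmetric]) auto
    have e3: "A1 * w + 2 * X = Cf t * w" unfolding X_def Cf_def A1_def Q_def by (simp add: algebra_simps)
    show ?thesis unfolding X_def[symmetric] e1 e2 e3 ..
  qed
  also have "\<dots> = ennreal (Cf t) * ennreal (real N powr (-1/4))"
  proof -
    have "0 \<le> Cf t" unfolding Cf_def using A10 Q0 unfolding A1_def Q_def by simp
    then show ?thesis using w0 unfolding w_def by (simp add: ennreal_mult)
  qed
  finally show ?thesis .
qed

end

theorem lemma7:
  fixes b c s lam :: real and R :: "real \<Rightarrow> real"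
    and \<rho>0 :: "real measure" and \<rho> :: "real \<Rightarrow> real measure"
  assumes "b \<ge> 0" and "c \<ge> 0" and "0 < s" and "s * c < 1"
    and "0 \<le> lam" and "lam \<le> 1/2"
    and "\<forall>x\<in>{0..1}. R x \<in> {0..1}" and "\<exists>L. lipschitz_on L {0..1} R"
    and "is_density \<rho>0"
    and "mean_field_solution b c s lam R \<rho>0 \<rho>"
  shows "\<forall>t>0. \<exists>C<\<infinity>. \<forall>(N::nat) (M::'a measure) (dtau::nat \<Rightarrow> 'a \<Rightarrow> real).
           N \<ge> 1 \<longrightarrow> prob_space M \<longrightarrow>
           prob_space.indep_vars M (\<lambda>_. borel) dtau {1..} \<longrightarrow>
           (\<forall>k\<ge>1. distributed M lborel (dtau k)
              (exponential_density (real N * (1 + s * (b - c) * mean (eta_aux b c s lam R N \<rho>0 k))))) \<longrightarrow>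
           (\<integral>\<^sup>+\<omega>. ennreal (bl_dist (eta_aux b c s lam R N \<rho>0 (kappa dtau t \<omega>)) (\<rho> t)) \<partial>M)
             \<le> C * ennreal (real N powr (-1/4))"
proof -
  obtain LR where LR: "lipschitz_on LR {0..1} R" using assms(8) by blast
  interpret S: setting b c s lam R LR \<rho>0 \<rho>
    by unfold_locales (use assms LR in auto)
  show ?thesis
  proof (intro allI impI)
    fix t :: real assume t: "0 < t"
    show "\<exists>C<\<infinity>. \<forall>(N::nat) (M::'a measure) (dtau::nat \<Rightarrow> 'a \<Rightarrow> real).
           N \<ge> 1 \<longrightarrow> prob_space M \<longrightarrow>
           prob_space.indep_vars M (\<lambda>_. borel) dtau {1..} \<longrightarrow>
           (\<forall>k\<ge>1. distributed M lborel (dtau k)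
              (exponential_density (real N * (1 + s * (b - c) * mean (eta_aux b c s lam R N \<rho>0 k))))) \<longrightarrow>
           (\<integral>\<^sup>+\<omega>. ennreal (bl_dist (eta_aux b c s lam R N \<rho>0 (kappa dtau t \<omega>)) (\<rho> t)) \<partial>M)
             \<le> C * ennreal (real N powr (-1/4))"
    proof (intro exI[of _ "ennreal (S.Cf t)"] conjI allI impI)
      show "ennreal (S.Cf t) < \<infinity>" by simp
      fix N :: nat and M :: "'a measure" and dtau :: "nat \<Rightarrow> 'a \<Rightarrow> real"
      assume "N \<ge> 1" "prob_space M" "prob_space.indep_vars M (\<lambda>_. borel) dtau {1..}"
        "\<forall>k\<ge>1. distributed M lborel (dtau k)
              (exponential_density (real N * (1 + s * (b - c) * mean (eta_aux b c s lam R N \<rho>0 k))))"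
      then show "(\<integral>\<^sup>+\<omega>. ennreal (bl_dist (eta_aux b c s lam R N \<rho>0 (kappa dtau t \<omega>)) (\<rho> t)) \<partial>M)
             \<le> ennreal (S.Cf t) * ennreal (real N powr (-1/4))"
        by (intro S.main_N[OF assms(9) t]) auto
    qed
  qed
qed

end
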